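(* Consider an $n\times n$ input-queued switch (setting in the context) operating under a scheduling policy that achieves state space collapse. Let $\mathbf D=\mathbf B^T\mathbf B$ with columns $\mathbf d_1,\dots,\mathbf d_{2n}$, and $\Phi=\{\boldsymbol\phi\in\mathbb C^{2n}:\mathrm{Re}(\mathbf d_l^T\boldsymbol\phi)\le0\ \forall l\}$. Let $\tilde{\boldsymbol\theta}\in\mathbb C^{n^2}$, let $\boldsymbol\theta$ be its projection onto $\mathcal S$ (real and imaginary parts separately), and suppose $\boldsymbol\theta=\mathbf B\boldsymbol\phi$ with $\boldsymbol\phi\in\Phi$. Write $\langle\mathbf x,\mathbf q\rangle=\sum_kx_kq_k$. Then, with all expectations under the stationary distribution: 1. $\lim_{\epsilon\to0}|\mathbb E[e^{\epsilon\langle\tilde{\boldsymbol\theta},\mathbf q\rangle}]|<\infty$ and $\lim_{\epsilon\to0}\frac1\epsilon|\mathbb E[u_ke^{\epsilon\langle\tilde{\boldsymbol\theta},\mathbf q\rangle}]|<\infty$ for all $k\in\{1,\dots,n^2\}$; the same holds with $\tilde{\boldsymbol\theta}$ replaced by $\boldsymbol\theta$; 2. if $\mathbf r\in\mathbb R^{2n}_+$ is (a random vector) such that $\mathbf q_{\|\mathcal K}=\mathbf B\mathbf r$, then $\lim_{\epsilon\to0}\mathbb E[e^{\epsilon\langle\tilde{\boldsymbol\theta},\mathbf q\rangle}]=\lim_{\epsilon\to0}\mathbb E[e^{\epsilon\langle\boldsymbol\theta,\mathbf q\rangle}]=\lim_{\epsilon\to0}\mathbb E[e^{\epsilon\sum_{l=1}^{2n}(\mathbf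 d_l^T\boldsymbol\phi)r_l}]$; 3. with $\mathbf r$ as in 2, for every $k=i+n(j-1)$, $i,j\in\{1,\dots,n\}$: $\lim_{\epsilon\to0}\frac1\epsilon\mathbb E[u_ke^{\epsilon\langle\tilde{\boldsymbol\theta},\mathbf q\rangle}]=\lim_{\epsilon\to0}\frac1\epsilon\mathbb E[u_ke^{\epsilon\langle\boldsymbol\theta,\mathbf q\rangle}]=\lim_{\epsilon\to0}\frac1\epsilon\mathbb E\big[u_ke^{\epsilon\sum_{l\notin\{i,n+j\}}(\mathbf d_l^T\boldsymbol\phi)r_l}\big]$.
   Context: Input-queued switch of size $n$: discrete time, $n^2$ queues indexed by $k=i+n(j-1)$, $i,j\in\{1,\dots,n\}$; arrivals $\mathbf a(t)\in\mathbb Z_{\ge0}^{n^2}$ i.i.d. over $t$, bounded by $a_{\max}$, mean $\boldsymbol\lambda$, diagonal covariance; schedules $\mathcal X=\{\mathbf s\in\{0,1\}^{n^2}:\sum_i s_{i+n(j-1)}=1\ \forall j,\sum_js_{i+n(j-1)}=1\ \forall i\}$; $\mathbf q(t+1)=[\mathbf q(t)+\mathbf a(t)-\mathbf s(t)]^+=\mathbf q(t)+\mathbf a(t)-\mathbf s(t)+\mathbf u(t)$ with unused service $\mathbf u(t)\in\{0,1\}^{n^2}$ ($u_k=1$ iff $s_k=1$, $a_k=0$, $q_k=0$). The chain is irreducible, aperiodic, positive recurrent; $\mathbf q$ is stationary, $\mathbf u$ the unused service in a step from stationarity. $\boldsymbol\lambda=(1-\epsilon)\boldsymbol\nu$, $\boldsymbol\nu\ge0$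 with all row sums $\sum_j\nu_{i+n(j-1)}$ and column sums $\sum_i\nu_{i+n(j-1)}$ equal to $1$, $\min_k\nu_k>0$. $\mathbf B\in\{0,1\}^{n^2\times2n}$ with $B_{i+n(j-1),i}=B_{i+n(j-1),n+j}=1$, other entries $0$; $\mathcal S=\{\mathbf B\mathbf w:\mathbf w\in\mathbb R^{2n}\}$; $\mathcal K=\{\mathbf B\mathbf r:\mathbf r\in\mathbb R^{2n}_+\}$; $\mathbf q_\perp$ and $\mathbf q_{\perp\mathcal K}$ are $\mathbf q$ minus its projections $\mathbf q_\|$ onto $\mathcal S$ and $\mathbf q_{\|\mathcal K}$ onto $\mathcal K$. State space collapse: for every $\theta\in\mathbb R$ there are $\epsilon(\theta)>0$, $C^\star<\infty$ with $\mathbb E[e^{\epsilon\theta\|\mathbf q_\perp\|}]\le\mathbb E[e^{\epsilon\theta\|\mathbf q_{\perp\mathcal K}\|}]<C^\star$ for $0<\epsilon\le\epsilon(\theta)$, and for each $r\ge1$, $\mathbb E\|\mathbf q_\perp\|^r\le\mathbb E\|\mathbf q_{\perp\mathcal K}\|^r\le C_r$ independent of $\epsilon$. *)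

theory Defs
  imports "HOL-Probability.Probability"
begin

text \<open>Input-queued switch. Queues are indexed by pairs (i,j) of the finite type 'n
  (the paper's k = i + n(j-1)); the 2n indices of B are Inl i (row i) and Inr j
  (the paper's n+j).\<close>

type_synonym 'n qstate = "'n \<times> 'n \<Rightarrow> nat"

definition is_schedule :: "('n::finite) qstate \<Rightarrow> bool" where
  "is_schedule s \<longleftrightarrow> (\<forall>k. s k \<le> 1) \<and> (\<forall>j. (\<Sum>i\<in>UNIV. s (i, j)) = 1)
     \<and> (\<forall>i. (\<Sum>j\<in>UNIV. s (i, j)) = 1)"

definition unused :: "'n qstate \<Rightarrow> 'n qstate \<Rightarrow> 'n qstate \<Rightarrow> 'n qstate" where
  "unused q a s = (\<lambda>k. if s k = 1 \<and> a k = 0 \<and> q k = 0 then 1 else 0)"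

text \<open>q(t+1) = [q + a - s]^+ (truncated subtraction on nat)\<close>
definition next_state :: "'n qstate \<Rightarrow> 'n qstate \<Rightarrow> 'n qstate \<Rightarrow> 'n qstate" where
  "next_state q a s = (\<lambda>k. (q k + a k) - s k)"

text \<open>Joint law of (q(t), a(t), s(t)) in one step started from the law P of q(t):
  arrivals independent of q, schedule drawn from the policy sigma given q.\<close>
definition step_pmf :: "'n qstate pmf \<Rightarrow> 'n qstate pmf \<Rightarrow> ('n qstate \<Rightarrow> 'n qstate pmf)
    \<Rightarrow> ('n qstate \<times> 'n qstate \<times> 'n qstate) pmf" where
  "step_pmf P A \<sigma> = do { q \<leftarrow> P; a \<leftarrow> A; s \<leftarrow> \<sigma> q; return_pmf (q, a, s) }"

definition Bmat :: "'n \<times> 'n \<Rightarrow> 'n + 'n \<Rightarrow> real" where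
  "Bmat k l = (case l of Inl i \<Rightarrow> (if fst k = i then 1 else 0)
                       | Inr j \<Rightarrow> (if snd k = j then 1 else 0))"

definition Bvec :: "('n + 'n \<Rightarrow> real) \<Rightarrow> real ^ ('n::finite \<times> 'n)" where
  "Bvec w = (\<chi> k. w (Inl (fst k)) + w (Inr (snd k)))"

definition Dmat :: "'n::finite + 'n \<Rightarrow> 'n + 'n \<Rightarrow> real" where
  "Dmat l m = (\<Sum>k\<in>UNIV. Bmat k l * Bmat k m)"

definition dphi :: "('n::finite + 'n \<Rightarrow> complex) \<Rightarrow> 'n + 'n \<Rightarrow> complex" where
  "dphi \<phi> l = (\<Sum>m\<in>UNIV. complex_of_real (Dmat l m) * \<phi> m)"

definition subspaceS :: "(real ^ ('n::finite \<times> 'n)) set" where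
  "subspaceS = range Bvec"

definition coneK :: "(real ^ ('n::finite \<times> 'n)) set" where
  "coneK = Bvec ` {w. \<forall>l. 0 \<le> w l}"

definition qvec :: "('n::finite) qstate \<Rightarrow> real ^ ('n \<times> 'n)" where
  "qvec q = (\<chi> k. real (q k))"

definition q_perpK :: "('n::finite) qstate \<Rightarrow> real ^ ('n \<times> 'n)" where
  "q_perpK q = qvec q - closest_point coneK (qvec q)"

definition proj_S_c :: "('n::finite \<times> 'n \<Rightarrow> complex) \<Rightarrow> 'n \<times> 'n \<Rightarrow> complex" where
  "proj_S_c x = (\<lambda>k. Complex (closest_point subspaceS (\<chi> k'. Re (x k')) $ k)
                             (closest_point subspaceS (\<chi> k'. Im (x k')) $ k))"

definition inner_c :: "('n::finite \<times> 'n \<Rightarrow> complex) \<Rightarrow> 'n qstate \<Rightarrow> complex" where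
  "inner_c x q = (\<Sum>k\<in>UNIV. x k * of_nat (q k))"

end

theory Submission
  imports Defs
begin

lemma sum_UNIV_plus:
  fixes g :: "'n::finite + 'n \<Rightarrow> 'b::comm_monoid_add"
  shows "(\<Sum>l\<in>UNIV. g l) = (\<Sum>i\<in>UNIV. g (Inl i)) + (\<Sum>j\<in>UNIV. g (Inr j))"
  by (subst UNIV_Plus_UNIV[symmetric], subst sum.Plus) (auto simp: o_def)

definition col :: "'n::finite + 'n \<Rightarrow> real ^ ('n \<times> 'n)" where
  "col l = Bvec (\<lambda>m. if m = l then 1 else 0)"

lemma Bvec_add: "Bvec (\<lambda>l. w l + w' l) = Bvec w + Bvec w'"
  by (simp add: Bvec_def vec_eq_iff)

lemma Bvec_scale: "Bvec (\<lambda>l. c * w l) = c *\<^sub>R Bvec w"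
  by (simp add: Bvec_def vec_eq_iff algebra_simps)

lemma Bvec_zero: "Bvec (\<lambda>l. 0) = 0"
  by (simp add: Bvec_def vec_eq_iff)

lemma Bvec_diff: "Bvec (\<lambda>l. w l - w' l) = Bvec w - Bvec w'"
  by (simp add: Bvec_def vec_eq_iff)

lemma Bvec_sum_col: "Bvec w = (\<Sum>l\<in>UNIV. w l *\<^sub>R col l)"
proof -
  have "(\<Sum>l\<in>UNIV. w l *\<^sub>R col l) $ k = w (Inl (fst k)) + w (Inr (snd k))" for k
  proof -
    have "(\<Sum>l\<in>UNIV. w l *\<^sub>R col l) $ k = (\<Sum>l\<in>UNIV. w l * (col l $ k))"
      by (simp add: sum_component)
    also have "\<dots> = (\<Sum>l\<in>UNIV. w l * ((if Inl (fst k) = l then 1 else 0) + (if Inr (snd k) = l then 1 else 0)))"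
      by (intro sum.cong) (auto simp: col_def Bvec_def)
    also have "\<dots> = (\<Sum>l\<in>UNIV. (if Inl (fst k) = l then w l else 0)) + (\<Sum>l\<in>UNIV. (if Inr (snd k) = l then w l else 0))"
      by (subst sum.distrib[symmetric]) (auto intro!: sum.cong)
    also have "\<dots> = w (Inl (fst k)) + w (Inr (snd k))"
      by simp
    finally show ?thesis .
  qed
  then show ?thesis by (simp add: Bvec_def vec_eq_iff)
qed

lemma convex_cone_coneK: "convex_cone (coneK :: (real ^ ('n::finite \<times> 'n)) set)"
  unfolding convex_cone_iff coneK_def
proof (intro conjI ballI allI impI)
  show "0 \<in> Bvec ` {w. \<forall>l. 0 \<le> w l}"
    by (rule image_eqI[of _ _ "\<lambda>l. 0"]) (auto simp: Bvec_zero)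
next
  fix x y :: "real ^ ('n \<times> 'n)" assume "x \<in> Bvec ` {w. \<forall>l. 0 \<le> w l}" "y \<in> Bvec ` {w. \<forall>l. 0 \<le> w l}"
  then obtain w w' where "x = Bvec w" "y = Bvec w'" "\<forall>l. 0 \<le> w l" "\<forall>l. 0 \<le> w' l" by auto
  then show "x + y \<in> Bvec ` {w. \<forall>l. 0 \<le> w l}"
    by (intro image_eqI[of _ _ "\<lambda>l. w l + w' l"]) (auto simp: Bvec_add)
next
  fix x :: "real ^ ('n \<times> 'n)" and c :: real assume "x \<in> Bvec ` {w. \<forall>l. 0 \<le> w l}" "0 \<le> c"
  then obtain w where "x = Bvec w" "\<forall>l. 0 \<le> w l" by auto
  then show "c *\<^sub>R x \<in> Bvec ` {w. \<forall>l. 0 \<le> w l}"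
    using \<open>0 \<le> c\<close> by (intro image_eqI[of _ _ "\<lambda>l. c * w l"]) (auto simp: Bvec_scale)
qed

lemma coneK_hull: "(coneK :: (real ^ ('n::finite \<times> 'n)) set) = convex_cone hull (range col)"
proof
  show "convex_cone hull (range col) \<subseteq> (coneK :: (real ^ ('n::finite \<times> 'n)) set)"
  proof (rule hull_minimal)
    show "range col \<subseteq> (coneK :: (real ^ ('n::finite \<times> 'n)) set)"
      unfolding coneK_def col_def by auto
  qed (rule convex_cone_coneK)
next
  have *: "(\<Sum>l\<in>F. w l *\<^sub>R col l) \<in> convex_cone hull (range col)" if "\<forall>l. 0 \<le> w l" "finite F"
    for w :: "'n + 'n \<Rightarrow> real" and F
    using that(2)
  proof induction
    case empty then show ?case by (simp add: convex_cone_hull_contains_0)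
  next
    case (insert x F)
    then show ?case
      using that(1) by (simp add: convex_cone_hull_add convex_cone_hull_mul hull_inc)
  qed
  show "(coneK :: (real ^ ('n::finite \<times> 'n)) set) \<subseteq> convex_cone hull (range col)"
    unfolding coneK_def using * by (auto simp: Bvec_sum_col)
qed

lemma closed_coneK: "closed (coneK :: (real ^ ('n::finite \<times> 'n)) set)"
  unfolding coneK_hull by (rule closed_convex_cone_hull) simp

lemma cp_coneK: "\<exists>w. (\<forall>l. 0 \<le> w l) \<and> Bvec w = closest_point (coneK :: (real ^ ('n::finite \<times> 'n)) set) v"
proof -
  have "closest_point (coneK :: (real ^ ('n::finite \<times> 'n)) set) v \<in> coneK"
    by (rule closest_point_in_set[OF closed_coneK]) (use convex_cone_coneK convex_cone_nonempty in blast)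
  then show ?thesis unfolding coneK_def by auto
qed

lemma subspace_S: "subspace (subspaceS :: (real ^ ('n::finite \<times> 'n)) set)"
  unfolding subspace_def subspaceS_def
proof (intro conjI ballI allI)
  show "0 \<in> range Bvec" by (metis Bvec_zero rangeI)
next
  fix x y :: "real ^ ('n \<times> 'n)" assume "x \<in> range Bvec" "y \<in> range Bvec"
  then obtain w w' where "x = Bvec w" "y = Bvec w'" by auto
  then show "x + y \<in> range Bvec" by (metis Bvec_add rangeI)
next
  fix c :: real and x :: "real ^ ('n \<times> 'n)" assume "x \<in> range Bvec"
  then obtain w where "x = Bvec w" by auto
  then show "c *\<^sub>R x \<in> range Bvec" by (metis Bvec_scale rangeI)
qed

lemma cp_S_orth:
  fixes v :: "real ^ ('n::finite \<times> 'n)"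
  shows "inner (v - closest_point subspaceS v) (Bvec w) = 0"
proof -
  let ?S = "subspaceS :: (real ^ ('n::finite \<times> 'n)) set"
  have cl: "closed ?S" by (rule closed_subspace[OF subspace_S])
  have cv: "convex ?S" by (rule subspace_imp_convex[OF subspace_S])
  have ne: "?S \<noteq> {}" using subspace_0[OF subspace_S] by blast
  let ?c = "closest_point ?S v"
  have cin: "?c \<in> ?S" by (rule closest_point_in_set[OF cl ne])
  have bw: "Bvec w \<in> ?S" by (simp add: subspaceS_def)
  have p: "?c + Bvec w \<in> ?S" by (rule subspace_add[OF subspace_S cin bw])
  have m: "?c - Bvec w \<in> ?S" by (rule subspace_diff[OF subspace_S cin bw])
  have "inner (v - ?c) ((?c + Bvec w) - ?c) \<le> 0"
    by (rule closest_point_dot[OF cv cl p])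
  moreover have "inner (v - ?c) ((?c - Bvec w) - ?c) \<le> 0"
    by (rule closest_point_dot[OF cv cl m])
  ultimately show ?thesis by (simp add: inner_diff_right)
qed

definition pc :: "('n::finite \<times> 'n \<Rightarrow> complex) \<Rightarrow> real ^ ('n \<times> 'n) \<Rightarrow> complex" where
  "pc z y = (\<Sum>k\<in>UNIV. z k * complex_of_real (y $ k))"

lemma inner_c_pc: "inner_c z q = pc z (qvec q)"
  by (simp add: inner_c_def pc_def qvec_def)

lemma pc_add: "pc z (a + b) = pc z a + pc z b"
  by (simp add: pc_def sum.distrib algebra_simps)

lemma Re_pc: "Re (pc z y) = (\<Sum>k\<in>UNIV. Re (z k) * y $ k)"
  by (simp add: pc_def Re_sum)

lemma Im_pc: "Im (pc z y) = (\<Sum>k\<in>UNIV. Im (z k) * y $ k)"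
  by (simp add: pc_def Im_sum)

lemma real_orth:
  fixes v :: "real ^ ('n::finite \<times> 'n)"
  shows "(\<Sum>k\<in>UNIV. v $ k * Bvec w $ k) = (\<Sum>k\<in>UNIV. closest_point subspaceS v $ k * Bvec w $ k)"
proof -
  have "inner (v - closest_point subspaceS v) (Bvec w) = 0" by (rule cp_S_orth)
  then have "(\<Sum>k\<in>UNIV. (v $ k - closest_point subspaceS v $ k) * Bvec w $ k) = 0"
    by (simp add: inner_vec_def)
  then show ?thesis by (simp add: algebra_simps sum_subtractf)
qed

lemma pc_proj: "pc \<theta>t (Bvec w) = pc (proj_S_c \<theta>t) (Bvec w)"
proof (rule complex_eqI)
  show "Re (pc \<theta>t (Bvec w)) = Re (pc (proj_S_c \<theta>t) (Bvec w))"
    using real_orth[of "\<chi> k'. Re (\<theta>t k')" w] by (simp add: Re_pc proj_S_c_def)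
  show "Im (pc \<theta>t (Bvec w)) = Im (pc (proj_S_c \<theta>t) (Bvec w))"
    using real_orth[of "\<chi> k'. Im (\<theta>t k')" w] by (simp add: Im_pc proj_S_c_def)
qed

lemma Bmat_sum:
  fixes f :: "'n::finite + 'n \<Rightarrow> complex"
  shows "(\<Sum>l\<in>UNIV. of_real (Bmat k l) * f l) = f (Inl (fst k)) + f (Inr (snd k))"
proof -
  have 1: "(\<Sum>i\<in>UNIV. of_real (Bmat k (Inl i)) * f (Inl i)) = (\<Sum>i\<in>UNIV. if fst k = i then f (Inl i) else 0)"
    by (rule sum.cong) (auto simp: Bmat_def)
  have 2: "(\<Sum>i\<in>UNIV. of_real (Bmat k (Inr i)) * f (Inr i)) = (\<Sum>i\<in>UNIV. if snd k = i then f (Inr i) else 0)"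
    by (rule sum.cong) (auto simp: Bmat_def)
  show ?thesis by (simp add: sum_UNIV_plus 1 2)
qed

lemma pc_dphi:
  assumes theta_eq: "\<forall>k. x k = \<phi> (Inl (fst k)) + \<phi> (Inr (snd k))"
  shows "pc x (Bvec w) = (\<Sum>l\<in>UNIV. dphi \<phi> l * complex_of_real (w l))"
proof -
  have "(\<Sum>l\<in>UNIV. dphi \<phi> l * complex_of_real (w l))
      = (\<Sum>l\<in>UNIV. \<Sum>m\<in>UNIV. \<Sum>k\<in>UNIV. of_real (Bmat k l) * of_real (Bmat k m) * \<phi> m * complex_of_real (w l))"
    by (simp add: dphi_def Dmat_def sum_distrib_right sum_distrib_left)
  also have "\<dots> = (\<Sum>k\<in>UNIV. (\<Sum>l\<in>UNIV. of_real (Bmat k l) * complex_of_real (w l)) * (\<Sum>m\<in>UNIV. of_real (Bmat k m) * \<phi> m))"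
  proof -
    let ?F = "\<lambda>l m k. of_real (Bmat k l) * of_real (Bmat k m) * \<phi> m * complex_of_real (w l)"
    have "(\<Sum>l\<in>UNIV. \<Sum>m\<in>UNIV. \<Sum>k\<in>UNIV. ?F l m k) = (\<Sum>l\<in>UNIV. \<Sum>k\<in>UNIV. \<Sum>m\<in>UNIV. ?F l m k)"
      by (intro sum.cong refl sum.swap)
    also have "\<dots> = (\<Sum>k\<in>UNIV. \<Sum>l\<in>UNIV. \<Sum>m\<in>UNIV. ?F l m k)"
      by (rule sum.swap)
    also have "\<dots> = (\<Sum>k\<in>UNIV. (\<Sum>l\<in>UNIV. of_real (Bmat k l) * complex_of_real (w l)) * (\<Sum>m\<in>UNIV. of_real (Bmat k m) * \<phi> m))"
      by (simp add: sum_distrib_right sum_distrib_left algebra_simps)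
    finally show ?thesis .
  qed
  also have "\<dots> = (\<Sum>k\<in>UNIV. (complex_of_real (w (Inl (fst k))) + complex_of_real (w (Inr (snd k)))) * (\<phi> (Inl (fst k)) + \<phi> (Inr (snd k))))"
    by (simp add: Bmat_sum)
  also have "\<dots> = pc x (Bvec w)"
    by (simp add: pc_def Bvec_def theta_eq algebra_simps)
  finally show ?thesis by simp
qed

lemma Re_G_nonpos:
  assumes "\<forall>l. Re (dphi \<phi> l) \<le> 0" "\<forall>l. 0 \<le> w l"
  shows "Re (\<Sum>l\<in>F. dphi \<phi> l * complex_of_real (w l)) \<le> 0"
  using assms by (simp add: Re_sum sum_nonpos mult_nonpos_nonneg)

lemma norm_pc: "norm (pc z p) \<le> (\<Sum>k\<in>UNIV. norm (z k)) * norm p"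
proof -
  have "norm (pc z p) \<le> (\<Sum>k\<in>UNIV. norm (z k * complex_of_real (p $ k)))"
    unfolding pc_def by (rule norm_sum)
  also have "\<dots> \<le> (\<Sum>k\<in>UNIV. norm (z k) * norm p)"
    by (intro sum_mono) (simp add: norm_mult mult_left_mono component_le_norm_cart)
  finally show ?thesis by (simp add: sum_distrib_right)
qed

lemma qvec_decomp:
  assumes "Bvec w = closest_point coneK (qvec q)"
  shows "qvec q = Bvec w + q_perpK q"
  using assms by (simp add: q_perpK_def)

lemma w_small:
  assumes "Bvec w = closest_point coneK (qvec q)" "\<forall>l. 0 \<le> w l" "q (i, j) = 0"
  shows "w (Inl i) \<le> norm (q_perpK q)" "w (Inr j) \<le> norm (q_perpK q)"
proof -
  have "qvec q $ (i, j) = Bvec w $ (i, j) + q_perpK q $ (i, j)"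
    using qvec_decomp[OF assms(1)] by simp
  then have "w (Inl i) + w (Inr j) = - q_perpK q $ (i, j)"
    using assms(3) by (simp add: qvec_def Bvec_def)
  moreover have "\<bar>q_perpK q $ (i, j)\<bar> \<le> norm (q_perpK q)" by (rule component_le_norm_cart)
  ultimately show "w (Inl i) \<le> norm (q_perpK q)" "w (Inr j) \<le> norm (q_perpK q)"
    using assms(2) by (smt (verit))+
qed

lemma set_step:
  assumes "y \<in> set_pmf (step_pmf P A \<sigma>)"
  shows "fst y \<in> set_pmf P" "fst (snd y) \<in> set_pmf A" "snd (snd y) \<in> set_pmf (\<sigma> (fst y))"
  using assms by (auto simp: step_pmf_def)

lemma map_fst_step: "map_pmf fst (step_pmf P A \<sigma>) = P"
  by (simp add: step_pmf_def map_bind_pmf bind_return_pmf')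

lemma map_a_step: "map_pmf (\<lambda>y. fst (snd y)) (step_pmf P A \<sigma>) = A"
  by (simp add: step_pmf_def map_bind_pmf bind_return_pmf')

lemma int_bdd:
  fixes f :: "'a \<Rightarrow> 'b::{banach,second_countable_topology}"
  shows "(\<forall>y\<in>set_pmf S. norm (f y) \<le> B) \<Longrightarrow> integrable (measure_pmf S) f"
  by (rule measure_pmf.integrable_const_bound[where B=B]) (auto simp: AE_measure_pmf_iff)

lemma E_fst_step:
  fixes g :: "_ \<Rightarrow> 'b::{banach,second_countable_topology}"
  shows "measure_pmf.expectation (step_pmf P A \<sigma>) (\<lambda>y. g (fst y)) = measure_pmf.expectation P g"
  by (metis integral_map_pmf map_fst_step)

lemma int_fst_step:
  fixes g :: "_ \<Rightarrow> 'b::{banach,second_countable_topology}"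
  shows "integrable (step_pmf P A \<sigma>) (\<lambda>y. g (fst y)) = integrable P g"
  by (metis integrable_map_pmf_eq map_fst_step)

lemma next_plus:
  assumes "s k \<le> 1"
  shows "next_state q a s k + s k = q k + a k + unused q a s k"
  using assms by (auto simp: next_state_def unused_def)

lemma unused_le:
  fixes P :: "('n::finite) qstate pmf" and A :: "'n qstate pmf" and \<sigma> and e :: real
    and amax :: nat and \<nu> :: "'n \<times> 'n \<Rightarrow> real"
  assumes sched: "\<forall>q. \<forall>s\<in>set_pmf (\<sigma> q). is_schedule s"
    and ab: "\<forall>a\<in>set_pmf A. \<forall>k. a k \<le> amax"
    and am: "\<forall>k. measure_pmf.expectation A (\<lambda>a. real (a k)) = (1 - e) * \<nu> k"
    and rows: "\<forall>i. (\<Sum>j\<in>UNIV. \<nu> (i, j)) = 1"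
    and st: "map_pmf (\<lambda>(q, a, s). next_state q a s) (step_pmf P A \<sigma>) = P"
  shows "measure_pmf.expectation (step_pmf P A \<sigma>)
           (\<lambda>y. real (unused (fst y) (fst (snd y)) (snd (snd y)) (i, j))) \<le> e"
proof -
  define S where "S = step_pmf P A \<sigma>"
  define X :: "'n qstate \<Rightarrow> real" where "X q = real (\<Sum>j\<in>UNIV. q (i, j))" for q
  define Xn where "Xn y = X (next_state (fst y) (fst (snd y)) (snd (snd y)))" for y :: "'n qstate \<times> 'n qstate \<times> 'n qstate"
  define Ar where "Ar y = real (\<Sum>j\<in>UNIV. fst (snd y) (i, j))" for y :: "'n qstate \<times> 'n qstate \<times> 'n qstate"
  define U where "U y = real (\<Sum>j\<in>UNIV. unused (fst y) (fst (snd y)) (snd (snd y)) (i, j))" for y :: "'n qstate \<times> 'n qstate \<times> 'n qstate"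
  define u where "u y = real (unused (fst y) (fst (snd y)) (snd (snd y)) (i, j))" for y :: "'n qstate \<times> 'n qstate \<times> 'n qstate"
  define c where "c = real (CARD('n) * amax) + real CARD('n)"
  have unused01: "unused q a s k \<le> 1" for q a s :: "'n qstate" and k by (simp add: unused_def)
  have key: "Xn y + 1 = X (fst y) + Ar y + U y" if "y \<in> set_pmf S" for y
  proof -
    obtain q a s where y: "y = (q, a, s)" by (cases y) auto
    have sch: "is_schedule s" using set_step(3)[of y P A \<sigma>] that sched by (simp add: S_def y)
    then have s1: "\<forall>k. s k \<le> 1" and srow: "(\<Sum>j\<in>UNIV. s (i, j)) = 1" by (auto simp: is_schedule_def)
    have "(\<Sum>j\<in>UNIV. next_state q a s (i, j) + s (i, j)) = (\<Sum>j\<in>UNIV. q (i, j) + a (i, j) + unused q a s (i, j))"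
      using s1 by (intro sum.cong refl next_plus) blast
    then have "(\<Sum>j\<in>UNIV. next_state q a s (i, j)) + 1 = (\<Sum>j\<in>UNIV. q (i, j)) + (\<Sum>j\<in>UNIV. a (i, j)) + (\<Sum>j\<in>UNIV. unused q a s (i, j))"
      by (simp add: sum.distrib srow)
    then have "real ((\<Sum>j\<in>UNIV. next_state q a s (i, j)) + 1) = real ((\<Sum>j\<in>UNIV. q (i, j)) + (\<Sum>j\<in>UNIV. a (i, j)) + (\<Sum>j\<in>UNIV. unused q a s (i, j)))"
      by metis
    then show ?thesis unfolding Xn_def X_def Ar_def U_def y by simp
  qed
  have Ar_bd: "0 \<le> Ar y \<and> Ar y \<le> real (CARD('n) * amax)" if "y \<in> set_pmf S" for y
  proof -
    have "\<forall>k. fst (snd y) k \<le> amax" using set_step(2)[of y P A \<sigma>] that ab by (simp add: S_def)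
    then have "(\<Sum>j\<in>UNIV. fst (snd y) (i, j)) \<le> (\<Sum>j\<in>(UNIV::'n set). amax)" by (intro sum_mono) auto
    then have "(\<Sum>j\<in>UNIV. fst (snd y) (i, j)) \<le> CARD('n) * amax" by simp
    then have "real (\<Sum>j\<in>UNIV. fst (snd y) (i, j)) \<le> real (CARD('n) * amax)" by (rule of_nat_mono)
    then show ?thesis unfolding Ar_def by (simp add: sum_nonneg)
  qed
  have U_bd: "0 \<le> U y \<and> U y \<le> real CARD('n)" for y
  proof -
    have "(\<Sum>j\<in>UNIV. unused (fst y) (fst (snd y)) (snd (snd y)) (i, j)) \<le> (\<Sum>j\<in>(UNIV::'n set). 1)"
      by (intro sum_mono) (simp add: unused_def)
    then have "(\<Sum>j\<in>UNIV. unused (fst y) (fst (snd y)) (snd (snd y)) (i, j)) \<le> CARD('n)" by simp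
    then have "real (\<Sum>j\<in>UNIV. unused (fst y) (fst (snd y)) (snd (snd y)) (i, j)) \<le> real CARD('n)" by (rule of_nat_mono)
    then show ?thesis unfolding U_def by (simp add: sum_nonneg)
  qed
  have u_le_U: "u y \<le> U y" for y
  proof -
    have "unused (fst y) (fst (snd y)) (snd (snd y)) (i, j) \<le> (\<Sum>j\<in>UNIV. unused (fst y) (fst (snd y)) (snd (snd y)) (i, j))"
      by (rule member_le_sum) auto
    then have "real (unused (fst y) (fst (snd y)) (snd (snd y)) (i, j)) \<le> real (\<Sum>j\<in>UNIV. unused (fst y) (fst (snd y)) (snd (snd y)) (i, j))" by (rule of_nat_mono)
    then show ?thesis unfolding u_def U_def by simp
  qed
  have X_nn: "0 \<le> X q" for q by (simp add: X_def sum_nonneg)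
  have c_nn: "0 \<le> c" by (simp add: c_def)
  have EAr: "measure_pmf.expectation S Ar = 1 - e"
  proof -
    have "measure_pmf.expectation S Ar = measure_pmf.expectation (map_pmf (\<lambda>y. fst (snd y)) S) (\<lambda>a. \<Sum>j\<in>UNIV. real (a (i, j)))"
      unfolding Ar_def by simp
    also have "\<dots> = measure_pmf.expectation A (\<lambda>a. \<Sum>j\<in>UNIV. real (a (i, j)))"
      unfolding S_def by (simp only: map_a_step)
    also have "\<dots> = (\<Sum>j\<in>UNIV. measure_pmf.expectation A (\<lambda>a. real (a (i, j))))"
    proof (rule Bochner_Integration.integral_sum)
      fix j :: 'n
      show "integrable (measure_pmf A) (\<lambda>a. real (a (i, j)))"
        by (rule int_bdd[where B="real amax"]) (use ab in auto)
    qed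
    also have "\<dots> = (1 - e) * (\<Sum>j\<in>UNIV. \<nu> (i, j))" by (simp add: am sum_distrib_left)
    finally show ?thesis using rows by simp
  qed
  have int_Ar: "integrable S Ar" by (rule int_bdd[where B="real (CARD('n) * amax)"]) (use Ar_bd in auto)
  have int_U: "integrable S U" by (rule int_bdd[where B="real CARD('n)"]) (use U_bd in auto)
  have int_u: "integrable S u" by (rule int_bdd[where B="1"]) (auto simp: u_def unused_def)
  define p where "p M = measure P {q. real M - c < X q}" for M :: nat
  have bound: "measure_pmf.expectation S U \<le> e + (c + 1) * p M" for M :: nat
  proof -
    define T where "T r = min r (real M)" for r
    define ind where "ind q = (if real M - c < X q then 1 else 0 :: real)" for q
    have T_bd: "norm (T (X q)) \<le> real M" for q using X_nn[of q] by (simp add: T_def)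
    have E1: "measure_pmf.expectation S (\<lambda>y. T (Xn y)) = measure_pmf.expectation S (\<lambda>y. T (X (fst y)))"
    proof -
      have "measure_pmf.expectation S (\<lambda>y. T (Xn y)) = measure_pmf.expectation (map_pmf (\<lambda>(q, a, s). next_state q a s) S) (\<lambda>q. T (X q))"
        by (simp add: Xn_def split_beta)
      also have "\<dots> = measure_pmf.expectation P (\<lambda>q. T (X q))" using st by (simp add: S_def)
      also have "\<dots> = measure_pmf.expectation S (\<lambda>y. T (X (fst y)))" unfolding S_def by (rule E_fst_step[symmetric])
      finally show ?thesis .
    qed
    have int1: "integrable S (\<lambda>y. T (Xn y))" by (rule int_bdd[where B="real M"]) (use T_bd in \<open>auto simp: Xn_def\<close>)
    have int2: "integrable S (\<lambda>y. T (X (fst y)))" by (rule int_bdd[where B="real M"]) (use T_bd in auto)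
    have int_ind: "integrable S (\<lambda>y. ind (fst y))" by (rule int_bdd[where B=1]) (auto simp: ind_def)
    have pw: "Ar y + U y - 1 - (c + 1) * ind (fst y) \<le> T (Xn y) - T (X (fst y))" if "y \<in> set_pmf S" for y
    proof -
      have k: "Xn y = X (fst y) + Ar y + U y - 1" using key[OF that] by simp
      have "0 \<le> Xn y" by (simp add: Xn_def X_nn)
      moreover note Ar_bd[OF that] U_bd[of y]
      moreover have "Ar y + U y \<le> c" using Ar_bd[OF that] U_bd[of y] by (simp add: c_def)
      ultimately show ?thesis using k X_nn[of "fst y"] c_nn unfolding T_def ind_def
        by (auto simp: min_def split: if_splits)
    qed
    have "measure_pmf.expectation S (\<lambda>y. Ar y + U y - 1 - (c + 1) * ind (fst y))
          \<le> measure_pmf.expectation S (\<lambda>y. T (Xn y) - T (X (fst y)))"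
      by (rule integral_mono_AE)
        (auto simp: AE_measure_pmf_iff pw int1 int2 int_Ar int_U int_ind)
    also have "\<dots> = 0" using E1 int1 int2 by simp
    finally have "measure_pmf.expectation S (\<lambda>y. Ar y + U y - 1 - (c + 1) * ind (fst y)) \<le> 0" .
    moreover have "measure_pmf.expectation S (\<lambda>y. Ar y + U y - 1 - (c + 1) * ind (fst y))
        = measure_pmf.expectation S Ar + measure_pmf.expectation S U - 1 - (c + 1) * measure_pmf.expectation S (\<lambda>y. ind (fst y))"
      using int_Ar int_U int_ind by (simp add: Bochner_Integration.integral_diff Bochner_Integration.integral_add)
    moreover have "measure_pmf.expectation S (\<lambda>y. ind (fst y)) = p M"
    proof -
      have "measure_pmf.expectation S (\<lambda>y. ind (fst y)) = measure_pmf.expectation P ind"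
        unfolding S_def by (rule E_fst_step)
      also have "\<dots> = measure_pmf.expectation P (indicator {q. real M - c < X q})"
        by (intro Bochner_Integration.integral_cong) (auto simp: ind_def indicator_def)
      also have "\<dots> = p M" by (simp add: p_def)
      finally show ?thesis .
    qed
    ultimately show ?thesis using EAr by simp
  qed
  have plim: "p \<longlonglongrightarrow> 0"
  proof -
    have "p \<longlonglongrightarrow> measure P (\<Inter>M. {q. real M - c < X q})"
      unfolding p_def
      by (rule measure_pmf.finite_Lim_measure_decseq) (auto simp: decseq_def)
    moreover have "(\<Inter>M. {q. real M - c < X q}) = {}"
    proof -
      have "q \<notin> (\<Inter>M. {q. real M - c < X q})" for q
      proof -
        obtain M :: nat where "X q + c < real M" using reals_Archimedean2 by blast
        then have "\<not> real M - c < X q" by simp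
        then show ?thesis by blast
      qed
      then show ?thesis by blast
    qed
    ultimately show ?thesis by simp
  qed
  have "measure_pmf.expectation S U \<le> e"
  proof (rule LIMSEQ_le_const)
    show "(\<lambda>M. e + (c + 1) * p M) \<longlonglongrightarrow> e"
      using tendsto_add[OF tendsto_const tendsto_mult[OF tendsto_const plim]] by simp
  qed (use bound in auto)
  moreover have "measure_pmf.expectation S u \<le> measure_pmf.expectation S U"
    by (rule integral_mono[OF int_u int_U u_le_U])
  ultimately show ?thesis unfolding S_def u_def[abs_def] by linarith
qed

lemma exp_diff_bound:
  fixes a b :: complex
  assumes "Re b \<le> 0" "norm (a - b) \<le> t"
  shows "norm (exp a - exp b) \<le> t * exp t"
proof -
  have "exp a - exp b = exp b * (exp (a - b) - 1)"
    by (simp add: algebra_simps flip: exp_add)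
  then have "norm (exp a - exp b) = exp (Re b) * norm (exp (a - b) - 1)"
    by (simp add: norm_mult)
  also have "\<dots> \<le> 1 * norm (exp (a - b) - 1)"
    using assms(1) by (intro mult_right_mono) auto
  also have "norm (exp (a - b) - 1) \<le> exp (norm (a - b)) * norm (a - b)"
    using Taylor_exp_field[of "a - b" 0] by simp
  also have "\<dots> \<le> exp t * t"
    using assms(2) by (intro mult_mono) auto
  finally show ?thesis by (simp add: mult.commute)
qed

lemma exp_le_W: fixes t a :: real assumes "0 \<le> t" "0 \<le> a" shows "exp (a * t) \<le> 1 + t ^ 4 + exp (4 * a * t)"
proof -
  have "0 \<le> a * t" using assms by simp
  then have "a * t \<le> 4 * a * t" by linarith
  then have "exp (a * t) \<le> exp (4 * a * t)" by (rule exp_mono)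
  moreover have "0 \<le> t ^ 4" by simp
  ultimately show ?thesis by linarith
qed

lemma sq_exp: fixes x :: real shows "exp x ^ 2 = exp (2 * x)"
  using exp_of_nat_mult[of 2 x] by simp

lemma texp_le_W: fixes t a :: real assumes "0 \<le> t" "0 \<le> a" shows "t * exp (a * t) \<le> 1 + t ^ 4 + exp (4 * a * t)"
proof -
  have h1: "2 * (t * exp (a * t)) \<le> t ^ 2 + exp (a * t) ^ 2"
  proof -
    have "0 \<le> (t - exp (a * t)) ^ 2" by simp
    then show ?thesis by (simp add: power2_diff)
  qed
  have e2: "exp (a * t) ^ 2 = exp (2 * (a * t))" by (rule sq_exp)
  have h2: "exp (2 * (a * t)) \<le> exp (4 * a * t)"
  proof (rule exp_mono)
    have "0 \<le> a * t" using assms by simp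
    then show "2 * (a * t) \<le> 4 * a * t" by linarith
  qed
  have h3: "t ^ 2 \<le> 1 + t ^ 4"
  proof -
    have "0 \<le> (t ^ 2 - 1) ^ 2" by simp
    then have "2 * t ^ 2 \<le> 1 + (t ^ 2) ^ 2" by (simp add: power2_diff)
    moreover have "(t ^ 2) ^ 2 = t ^ 4" by (simp flip: power_mult)
    moreover have "0 \<le> t ^ 2" by simp
    ultimately show ?thesis by linarith
  qed
  have "0 \<le> t ^ 4" "0 < exp (4 * a * t)" by simp_all
  then show ?thesis using h1 h2 h3 e2 by linarith
qed

lemma texp2_le_W: fixes t a :: real assumes "0 \<le> t" "0 \<le> a" shows "(t * exp (a * t)) ^ 2 \<le> 1 + t ^ 4 + exp (4 * a * t)"
proof -
  have eq: "(t * exp (a * t)) ^ 2 = t ^ 2 * exp (2 * (a * t))"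
    by (simp add: power_mult_distrib sq_exp)
  have h1: "2 * (t ^ 2 * exp (2 * (a * t))) \<le> (t ^ 2) ^ 2 + exp (2 * (a * t)) ^ 2"
  proof -
    have "0 \<le> (t ^ 2 - exp (2 * (a * t))) ^ 2" by simp
    then show ?thesis by (simp add: power2_diff)
  qed
  have e2: "exp (2 * (a * t)) ^ 2 = exp (2 * (2 * (a * t)))" by (rule sq_exp)
  have e3: "2 * (2 * (a * t)) = 4 * a * t" by simp
  have t4: "(t ^ 2) ^ 2 = t ^ 4" by (simp flip: power_mult)
  have "0 \<le> t ^ 4" "0 < exp (4 * a * t)" by simp_all
  then show ?thesis using eq h1 e2 e3 t4 by (smt (verit))
qed

lemma exp_le_1_texp: fixes y :: real assumes "0 \<le> y" shows "exp y \<le> 1 + y * exp y"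
proof -
  have "1 - y \<le> exp (- y)" using exp_ge_add_one_self[of "-y"] by simp
  then have "(1 - y) * exp y \<le> exp (-y) * exp y" by (intro mult_right_mono) auto
  then have "(1 - y) * exp y \<le> 1" by (simp flip: exp_add)
  then show ?thesis by (simp add: algebra_simps)
qed

lemma Y_le: fixes s Y :: real assumes "0 < s" shows "Y \<le> 1 / s + s * Y ^ 2"
proof -
  have "0 \<le> (s * Y - 1) ^ 2" by simp
  then have h: "2 * (s * Y) \<le> (s * Y) ^ 2 + 1" by (simp add: power2_diff)
  have h2: "0 \<le> (s * Y) ^ 2" by simp
  have h3: "s * Y \<le> (s * Y) ^ 2 + 1" using h h2 by linarith
  have "Y = (s * Y) / s" using assms by simp
  also have "\<dots> \<le> ((s * Y) ^ 2 + 1) / s" using h3 assms by (intro divide_right_mono) auto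
  also have "\<dots> = 1 / s + s * Y ^ 2" using assms by (simp add: field_simps power2_eq_square)
  finally show ?thesis .
qed

lemma powr4: "(x::real) \<ge> 0 \<Longrightarrow> x powr 4 = x ^ 4"
  by (cases "x = 0") (simp_all add: powr_realpow)

lemma E_bound_P:
  fixes f :: "'a \<Rightarrow> complex"
  assumes "integrable (measure_pmf P) g" "\<forall>y\<in>set_pmf P. norm (f y) \<le> \<beta> * g y" "0 \<le> \<beta>"
  shows "integrable (measure_pmf P) f" "norm (measure_pmf.expectation P f) \<le> \<beta> * measure_pmf.expectation P g"
proof -
  have ig: "integrable (measure_pmf P) (\<lambda>y. \<beta> * g y)" using assms(1) by simp
  show i: "integrable (measure_pmf P) f"
  proof (rule Bochner_Integration.integrable_bound[OF ig])
    have "\<forall>y\<in>set_pmf P. norm (f y) \<le> norm (\<beta> * g y)"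
      using assms(2) by (metis abs_ge_self order_trans real_norm_def)
    then show "AE x in measure_pmf P. norm (f x) \<le> norm (\<beta> * g x)" by (simp add: AE_measure_pmf_iff)
  qed simp
  have "norm (measure_pmf.expectation P f) \<le> measure_pmf.expectation P (\<lambda>y. norm (f y))"
    by (rule Bochner_Integration.integral_norm_bound)
  also have "\<dots> \<le> measure_pmf.expectation P (\<lambda>y. \<beta> * g y)"
    by (rule integral_mono_AE) (use i ig assms(2) in \<open>auto simp: AE_measure_pmf_iff\<close>)
  finally show "norm (measure_pmf.expectation P f) \<le> \<beta> * measure_pmf.expectation P g" by simp
qed

lemma E_bound_S:
  fixes f :: "'a \<times> 'b \<Rightarrow> complex"
  assumes mp: "map_pmf fst S = P" and ig: "integrable (measure_pmf P) g"
    and bd: "\<forall>y\<in>set_pmf S. norm (f y) \<le> \<alpha> * u y + \<beta> * g (fst y)"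
    and u01: "\<forall>y. 0 \<le> u y \<and> u y \<le> 1" and "0 \<le> \<alpha>" "0 \<le> \<beta>"
    and Eu: "measure_pmf.expectation S u \<le> e"
  shows "integrable (measure_pmf S) f" "norm (measure_pmf.expectation S f) \<le> \<alpha> * e + \<beta> * measure_pmf.expectation P g"
proof -
  have ig': "integrable (measure_pmf S) (\<lambda>y. g (fst y))"
    using ig mp by (metis integrable_map_pmf_eq)
  have iu: "integrable (measure_pmf S) u" by (rule int_bdd[where B=1]) (use u01 in auto)
  have ih: "integrable (measure_pmf S) (\<lambda>y. \<alpha> * u y + \<beta> * g (fst y))" using ig' iu by simp
  show i: "integrable (measure_pmf S) f"
  proof (rule Bochner_Integration.integrable_bound[OF ih])
    have "\<forall>y\<in>set_pmf S. norm (f y) \<le> norm (\<alpha> * u y + \<beta> * g (fst y))"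
      using bd by (metis abs_ge_self order_trans real_norm_def)
    then show "AE x in measure_pmf S. norm (f x) \<le> norm (\<alpha> * u x + \<beta> * g (fst x))" by (simp add: AE_measure_pmf_iff)
  qed simp
  have "norm (measure_pmf.expectation S f) \<le> measure_pmf.expectation S (\<lambda>y. norm (f y))"
    by (rule Bochner_Integration.integral_norm_bound)
  also have "\<dots> \<le> measure_pmf.expectation S (\<lambda>y. \<alpha> * u y + \<beta> * g (fst y))"
    by (rule integral_mono_AE) (use i ih bd in \<open>auto simp: AE_measure_pmf_iff\<close>)
  also have "\<dots> = \<alpha> * measure_pmf.expectation S u + \<beta> * measure_pmf.expectation S (\<lambda>y. g (fst y))"
    using ig' iu by simp
  also have "measure_pmf.expectation S (\<lambda>y. g (fst y)) = measure_pmf.expectation P g"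
    using mp by (metis integral_map_pmf)
  also have "\<alpha> * measure_pmf.expectation S u \<le> \<alpha> * e" using Eu \<open>0 \<le> \<alpha>\<close> by (rule mult_left_mono[OF _ ]) 
  finally show "norm (measure_pmf.expectation S f) \<le> \<alpha> * e + \<beta> * measure_pmf.expectation P g" by simp
qed

abbreviation G :: "('n::finite + 'n \<Rightarrow> complex) \<Rightarrow> ('n + 'n \<Rightarrow> real) \<Rightarrow> complex" where
  "G \<phi> w \<equiv> (\<Sum>l\<in>UNIV. dphi \<phi> l * complex_of_real (w l))"

lemma decomp:
  assumes theta_eq: "\<forall>k. proj_S_c \<theta>t k = \<phi> (Inl (fst k)) + \<phi> (Inr (snd k))"
    and cp: "Bvec w = closest_point coneK (qvec q)" and z: "z \<in> {\<theta>t, proj_S_c \<theta>t}"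
  shows "inner_c z q = G \<phi> w + pc z (q_perpK q)"
proof -
  have "inner_c z q = pc z (Bvec w) + pc z (q_perpK q)"
    using qvec_decomp[OF cp] by (simp add: inner_c_pc pc_add)
  moreover have "pc z (Bvec w) = pc (proj_S_c \<theta>t) (Bvec w)"
    using z pc_proj by auto
  moreover have "pc (proj_S_c \<theta>t) (Bvec w) = G \<phi> w"
    by (rule pc_dphi[OF theta_eq])
  ultimately show ?thesis by simp
qed

lemma pc_M:
  assumes "(\<Sum>k\<in>UNIV. norm (z k)) \<le> M"
  shows "norm (pc z p) \<le> M * norm p"
  using norm_pc[of z p] mult_right_mono[OF assms norm_ge_zero[of p]] by linarith


lemma pw_bounds:
  fixes \<theta>t :: "'n::finite \<times> 'n \<Rightarrow> complex" and \<phi> :: "'n + 'n \<Rightarrow> complex"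
  assumes theta_eq: "\<forall>k. proj_S_c \<theta>t k = \<phi> (Inl (fst k)) + \<phi> (Inr (snd k))"
    and phi_in_Phi: "\<forall>l. Re (dphi \<phi> l) \<le> 0"
    and wnn: "\<forall>l. 0 \<le> w l" and cp: "Bvec w = closest_point coneK (qvec q)"
    and eps: "0 \<le> \<epsilon>"
    and Mb: "(\<Sum>k\<in>UNIV. norm (\<theta>t k)) + (\<Sum>k\<in>UNIV. norm (proj_S_c \<theta>t k)) + (\<Sum>l\<in>UNIV. norm (dphi \<phi> l)) \<le> M"
    and z: "z \<in> {\<theta>t, proj_S_c \<theta>t}"
  shows "norm (exp (complex_of_real \<epsilon> * inner_c z q)) \<le> exp (\<epsilon> * M * norm (q_perpK q))"
    and "norm (exp (complex_of_real \<epsilon> * inner_c z q) - exp (complex_of_real \<epsilon> * G \<phi> w))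
          \<le> (\<epsilon> * M * norm (q_perpK q)) * exp (\<epsilon> * M * norm (q_perpK q))"
proof -
  let ?x = "norm (q_perpK q)"
  have Cz: "(\<Sum>k\<in>UNIV. norm (z k)) \<le> M"
  proof -
    have "0 \<le> (\<Sum>k\<in>UNIV. norm (\<theta>t k))" "0 \<le> (\<Sum>k\<in>UNIV. norm (proj_S_c \<theta>t k))" "0 \<le> (\<Sum>l\<in>UNIV. norm (dphi \<phi> l))"
      by (simp_all add: sum_nonneg)
    then show ?thesis using z Mb by auto
  qed
  have dec: "inner_c z q = G \<phi> w + pc z (q_perpK q)" by (rule decomp[OF theta_eq cp z])
  have pcb: "norm (pc z (q_perpK q)) \<le> M * ?x" by (rule pc_M[OF Cz])
  have ReG: "Re (G \<phi> w) \<le> 0" by (rule Re_G_nonpos[OF phi_in_Phi wnn])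
  have "Re (pc z (q_perpK q)) \<le> M * ?x" using pcb complex_Re_le_cmod order_trans by blast
  then have "Re (inner_c z q) \<le> M * ?x" using dec ReG by simp
  then have "\<epsilon> * Re (inner_c z q) \<le> \<epsilon> * (M * ?x)" using eps by (rule mult_left_mono)
  then show "norm (exp (complex_of_real \<epsilon> * inner_c z q)) \<le> exp (\<epsilon> * M * ?x)"
    by (simp add: mult.assoc)
  show "norm (exp (complex_of_real \<epsilon> * inner_c z q) - exp (complex_of_real \<epsilon> * G \<phi> w))
          \<le> (\<epsilon> * M * ?x) * exp (\<epsilon> * M * ?x)"
  proof (rule exp_diff_bound)
    show "Re (complex_of_real \<epsilon> * G \<phi> w) \<le> 0" using ReG eps by (simp add: mult_nonneg_nonpos)
    have "complex_of_real \<epsilon> * inner_c z q - complex_of_real \<epsilon> * G \<phi> w = complex_of_real \<epsilon> * pc z (q_perpK q)"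
      using dec by (simp add: algebra_simps)
    moreover have "norm (complex_of_real \<epsilon> * pc z (q_perpK q)) \<le> \<epsilon> * (M * ?x)"
      using pcb eps by (simp add: norm_mult mult_left_mono)
    ultimately show "norm (complex_of_real \<epsilon> * inner_c z q - complex_of_real \<epsilon> * G \<phi> w) \<le> \<epsilon> * M * ?x"
      by (simp add: mult.assoc)
  qed
qed

lemma pw_bound3:
  fixes \<theta>t :: "'n::finite \<times> 'n \<Rightarrow> complex" and \<phi> :: "'n + 'n \<Rightarrow> complex"
  assumes theta_eq: "\<forall>k. proj_S_c \<theta>t k = \<phi> (Inl (fst k)) + \<phi> (Inr (snd k))"
    and phi_in_Phi: "\<forall>l. Re (dphi \<phi> l) \<le> 0"
    and wnn: "\<forall>l. 0 \<le> w l" and cp: "Bvec w = closest_point coneK (qvec q)"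
    and eps: "0 \<le> \<epsilon>"
    and Mb: "(\<Sum>k\<in>UNIV. norm (\<theta>t k)) + (\<Sum>k\<in>UNIV. norm (proj_S_c \<theta>t k)) + (\<Sum>l\<in>UNIV. norm (dphi \<phi> l)) \<le> M"
    and q0: "q (i, j) = 0"
  shows "norm (exp (complex_of_real \<epsilon> * inner_c (proj_S_c \<theta>t) q)
           - exp (complex_of_real \<epsilon> * (\<Sum>l\<in>UNIV - {Inl i, Inr j}. dphi \<phi> l * complex_of_real (w l))))
          \<le> (\<epsilon> * M * norm (q_perpK q)) * exp (\<epsilon> * M * norm (q_perpK q))"
proof (rule exp_diff_bound)
  let ?x = "norm (q_perpK q)"
  let ?Gp = "(\<Sum>l\<in>UNIV - {Inl i, Inr j}. dphi \<phi> l * complex_of_real (w l))"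
  have Cp: "(\<Sum>k\<in>UNIV. norm (proj_S_c \<theta>t k)) \<le> M - (\<Sum>l\<in>UNIV. norm (dphi \<phi> l))"
  proof -
    have "0 \<le> (\<Sum>k\<in>UNIV. norm (\<theta>t k))" by (simp add: sum_nonneg)
    then show ?thesis using Mb by simp
  qed
  have dec: "inner_c (proj_S_c \<theta>t) q = G \<phi> w + pc (proj_S_c \<theta>t) (q_perpK q)" by (rule decomp[OF theta_eq cp]) simp
  have pcb: "norm (pc (proj_S_c \<theta>t) (q_perpK q)) \<le> (M - (\<Sum>l\<in>UNIV. norm (dphi \<phi> l))) * ?x" by (rule pc_M[OF Cp])
  have split: "G \<phi> w = ?Gp + (dphi \<phi> (Inl i) * complex_of_real (w (Inl i)) + dphi \<phi> (Inr j) * complex_of_real (w (Inr j)))"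
    by (subst sum.subset_diff[of "{Inl i, Inr j}"]) auto
  have wi: "w (Inl i) \<le> ?x" and wj: "w (Inr j) \<le> ?x" using w_small[OF cp wnn q0] by auto
  have two: "norm (dphi \<phi> (Inl i)) + norm (dphi \<phi> (Inr j)) \<le> (\<Sum>l\<in>UNIV. norm (dphi \<phi> l))"
  proof -
    have "(\<Sum>l\<in>{Inl i, Inr j}. norm (dphi \<phi> l)) \<le> (\<Sum>l\<in>UNIV. norm (dphi \<phi> l))"
      by (rule sum_mono2) auto
    then show ?thesis by simp
  qed
  have n2: "norm (dphi \<phi> (Inl i) * complex_of_real (w (Inl i)) + dphi \<phi> (Inr j) * complex_of_real (w (Inr j)))
            \<le> (\<Sum>l\<in>UNIV. norm (dphi \<phi> l)) * ?x"
  proof -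
    have "norm (dphi \<phi> (Inl i) * complex_of_real (w (Inl i)) + dphi \<phi> (Inr j) * complex_of_real (w (Inr j)))
        \<le> norm (dphi \<phi> (Inl i)) * w (Inl i) + norm (dphi \<phi> (Inr j)) * w (Inr j)"
      using wnn by (smt (verit) norm_mult norm_of_real norm_triangle_ineq abs_of_nonneg)
    also have "\<dots> \<le> norm (dphi \<phi> (Inl i)) * ?x + norm (dphi \<phi> (Inr j)) * ?x"
      using wi wj by (intro add_mono mult_left_mono) auto
    also have "\<dots> \<le> (\<Sum>l\<in>UNIV. norm (dphi \<phi> l)) * ?x"
      using two by (simp add: distrib_right[symmetric] mult_right_mono)
    finally show ?thesis .
  qed
  show "Re (complex_of_real \<epsilon> * ?Gp) \<le> 0"
    using Re_G_nonpos[OF phi_in_Phi wnn, of "UNIV - {Inl i, Inr j}"] eps by (simp add: mult_nonneg_nonpos)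
  have "complex_of_real \<epsilon> * inner_c (proj_S_c \<theta>t) q - complex_of_real \<epsilon> * ?Gp
        = complex_of_real \<epsilon> * ((dphi \<phi> (Inl i) * complex_of_real (w (Inl i)) + dphi \<phi> (Inr j) * complex_of_real (w (Inr j))) + pc (proj_S_c \<theta>t) (q_perpK q))"
    using dec split by (simp add: algebra_simps)
  moreover have "norm ((dphi \<phi> (Inl i) * complex_of_real (w (Inl i)) + dphi \<phi> (Inr j) * complex_of_real (w (Inr j))) + pc (proj_S_c \<theta>t) (q_perpK q)) \<le> M * ?x"
    using norm_triangle_le[OF add_mono[OF n2 pcb]] by (simp add: algebra_simps)
  ultimately show "norm (complex_of_real \<epsilon> * inner_c (proj_S_c \<theta>t) q - complex_of_real \<epsilon> * ?Gp) \<le> \<epsilon> * M * ?x"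
    using eps by (simp add: norm_mult mult.assoc mult_left_mono)
qed

lemma unused01: "unused q a s k = 0 \<or> unused q a s k = 1"
  by (simp add: unused_def)

lemma unused_q0:
  assumes "unused q a s k = 1" shows "q k = 0"
proof (rule ccontr)
  assume "q k \<noteq> 0"
  then have "unused q a s k = 0" by (simp add: unused_def)
  with assms show False by simp
qed

lemma eps_level:
  fixes P :: "('n::finite) qstate pmf" and A :: "'n qstate pmf" and \<sigma> :: "'n qstate \<Rightarrow> 'n qstate pmf"
    and \<theta>t :: "'n \<times> 'n \<Rightarrow> complex" and \<phi> :: "'n + 'n \<Rightarrow> complex" and \<epsilon> M CW :: real
  defines "W \<equiv> \<lambda>q. 1 + norm (q_perpK q) ^ 4 + exp (\<epsilon> * (4 * M) * norm (q_perpK q))"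
  assumes theta_eq: "\<forall>k. proj_S_c \<theta>t k = \<phi> (Inl (fst k)) + \<phi> (Inr (snd k))"
    and phi_in_Phi: "\<forall>l. Re (dphi \<phi> l) \<le> 0"
    and eps: "0 < \<epsilon>"
    and Mb: "(\<Sum>k\<in>UNIV. norm (\<theta>t k)) + (\<Sum>k\<in>UNIV. norm (proj_S_c \<theta>t k)) + (\<Sum>l\<in>UNIV. norm (dphi \<phi> l)) \<le> M"
    and M0: "0 \<le> M"
    and Wint: "integrable (measure_pmf P) W" and WE: "measure_pmf.expectation P W \<le> CW"
    and Eu: "\<forall>k. measure_pmf.expectation (step_pmf P A \<sigma>)
                 (\<lambda>y. real (unused (fst y) (fst (snd y)) (snd (snd y)) k)) \<le> \<epsilon>"
  shows "\<forall>z\<in>{\<theta>t, proj_S_c \<theta>t}.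
           integrable (measure_pmf P) (\<lambda>q. exp (complex_of_real \<epsilon> * inner_c z q)) \<and>
           norm (measure_pmf.expectation P (\<lambda>q. exp (complex_of_real \<epsilon> * inner_c z q))) \<le> CW"
    and "\<forall>z\<in>{\<theta>t, proj_S_c \<theta>t}. \<forall>k.
          integrable (measure_pmf (step_pmf P A \<sigma>))
            (\<lambda>(q, a, s). of_nat (unused q a s k) * exp (complex_of_real \<epsilon> * inner_c z q)) \<and>
          norm (measure_pmf.expectation (step_pmf P A \<sigma>)
            (\<lambda>(q, a, s). of_nat (unused q a s k) * exp (complex_of_real \<epsilon> * inner_c z q))) / \<epsilon> \<le> 1 + M * CW"
proof -
  let ?S = "step_pmf P A \<sigma>"
  let ?x = "\<lambda>q. norm (q_perpK q)"
  have eM0: "0 \<le> \<epsilon> * M" using eps M0 by simp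
  have e4: "exp (4 * (\<epsilon> * M) * t) = exp (\<epsilon> * (4 * M) * t)" for t by (simp add: mult.assoc mult.left_commute)
  have Wb1: "exp (\<epsilon> * M * ?x q) \<le> W q" for q
    using exp_le_W[OF norm_ge_zero eM0, of "q_perpK q"] unfolding W_def e4 .
  have Wb2: "?x q * exp (\<epsilon> * M * ?x q) \<le> W q" for q
    using texp_le_W[OF norm_ge_zero eM0, of "q_perpK q"] unfolding W_def e4 .
  have W0: "0 \<le> W q" for q
  proof -
    have "0 \<le> norm (q_perpK q) ^ 4" by simp
    moreover have "0 < exp (\<epsilon> * (4 * M) * norm (q_perpK q))" by simp
    ultimately show ?thesis unfolding W_def by linarith
  qed
  have epsle: "0 \<le> \<epsilon>" using eps by simp
  define wf where "wf q = (SOME w. (\<forall>l. 0 \<le> w l) \<and> Bvec w = closest_point coneK (qvec q))" for q :: "'n qstate"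
  have wf: "\<forall>q. (\<forall>l. 0 \<le> wf q l) \<and> Bvec (wf q) = closest_point coneK (qvec q)"
  proof
    fix q :: "'n qstate"
    show "(\<forall>l. 0 \<le> wf q l) \<and> Bvec (wf q) = closest_point coneK (qvec q)"
      unfolding wf_def by (rule someI_ex[OF cp_coneK])
  qed
  show "\<forall>z\<in>{\<theta>t, proj_S_c \<theta>t}.
           integrable (measure_pmf P) (\<lambda>q. exp (complex_of_real \<epsilon> * inner_c z q)) \<and>
           norm (measure_pmf.expectation P (\<lambda>q. exp (complex_of_real \<epsilon> * inner_c z q))) \<le> CW"
  proof
    fix z assume z: "z \<in> {\<theta>t, proj_S_c \<theta>t}"
    have b: "\<forall>q\<in>set_pmf P. norm (exp (complex_of_real \<epsilon> * inner_c z q)) \<le> 1 * W q"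
    proof
      fix q
      have "norm (exp (complex_of_real \<epsilon> * inner_c z q)) \<le> exp (\<epsilon> * M * ?x q)"
        using pw_bounds(1)[OF theta_eq phi_in_Phi conjunct1[OF wf[rule_format, of q]] conjunct2[OF wf[rule_format, of q]] epsle Mb z] .
      then show "norm (exp (complex_of_real \<epsilon> * inner_c z q)) \<le> 1 * W q" using Wb1[of q] by linarith
    qed
    show "integrable (measure_pmf P) (\<lambda>q. exp (complex_of_real \<epsilon> * inner_c z q)) \<and>
           norm (measure_pmf.expectation P (\<lambda>q. exp (complex_of_real \<epsilon> * inner_c z q))) \<le> CW"
      using E_bound_P[OF Wint b] WE by simp
  qed
  show "\<forall>z\<in>{\<theta>t, proj_S_c \<theta>t}. \<forall>k.
          integrable (measure_pmf ?S)
            (\<lambda>(q, a, s). of_nat (unused q a s k) * exp (complex_of_real \<epsilon> * inner_c z q)) \<and>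
          norm (measure_pmf.expectation ?S
            (\<lambda>(q, a, s). of_nat (unused q a s k) * exp (complex_of_real \<epsilon> * inner_c z q))) / \<epsilon> \<le> 1 + M * CW"
  proof (intro ballI allI)
    fix z k assume z: "z \<in> {\<theta>t, proj_S_c \<theta>t}"
    let ?f = "(\<lambda>(q, a, s). of_nat (unused q a s k) * exp (complex_of_real \<epsilon> * inner_c z q)) :: _ \<Rightarrow> complex"
    let ?u = "\<lambda>y. real (unused (fst y) (fst (snd y)) (snd (snd y)) k)"
    have b: "\<forall>y\<in>set_pmf ?S. norm (?f y) \<le> 1 * ?u y + (\<epsilon> * M) * W (fst y)"
    proof
      fix y :: "'n qstate \<times> 'n qstate \<times> 'n qstate"
      obtain q a s where y: "y = (q, a, s)" by (cases y) auto
      have ne: "norm (exp (complex_of_real \<epsilon> * inner_c z q)) \<le> exp (\<epsilon> * M * ?x q)"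
        using pw_bounds(1)[OF theta_eq phi_in_Phi conjunct1[OF wf[rule_format, of q]] conjunct2[OF wf[rule_format, of q]] epsle Mb z] .
      have "exp (\<epsilon> * M * ?x q) \<le> 1 + (\<epsilon> * M * ?x q) * exp (\<epsilon> * M * ?x q)"
        by (rule exp_le_1_texp) (use eM0 in simp)
      also have "(\<epsilon> * M * ?x q) * exp (\<epsilon> * M * ?x q) = (\<epsilon> * M) * (?x q * exp (\<epsilon> * M * ?x q))" by simp
      also have "\<dots> \<le> (\<epsilon> * M) * W q" by (rule mult_left_mono[OF Wb2 eM0])
      finally have ne2: "norm (exp (complex_of_real \<epsilon> * inner_c z q)) \<le> 1 + (\<epsilon> * M) * W q" using ne by linarith
      have "0 \<le> (\<epsilon> * M) * W q" using eM0 W0 by simp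
      then show "norm (?f y) \<le> 1 * ?u y + (\<epsilon> * M) * W (fst y)"
        using unused01[of q a s k] ne2 by (auto simp: y)
    qed
    have u01: "\<forall>y. 0 \<le> ?u y \<and> ?u y \<le> 1" by (simp add: unused_def)
    note E = E_bound_S[OF map_fst_step Wint b u01 _ eM0 Eu[rule_format, of k]]
    show "integrable (measure_pmf ?S) ?f \<and> norm (measure_pmf.expectation ?S ?f) / \<epsilon> \<le> 1 + M * CW"
    proof
      show "integrable (measure_pmf ?S) ?f" using E(1) by simp
      have "norm (measure_pmf.expectation ?S ?f) \<le> \<epsilon> + \<epsilon> * M * CW"
        using E(2) mult_left_mono[OF WE eM0] by simp
      then show "norm (measure_pmf.expectation ?S ?f) / \<epsilon> \<le> 1 + M * CW"
        using eps by (simp add: divide_le_eq algebra_simps)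
    qed
  qed
qed


lemma eps_level2:
  fixes P :: "('n::finite) qstate pmf" and A :: "'n qstate pmf" and \<sigma> :: "'n qstate \<Rightarrow> 'n qstate pmf"
    and \<theta>t :: "'n \<times> 'n \<Rightarrow> complex" and \<phi> :: "'n + 'n \<Rightarrow> complex" and \<epsilon> M CW :: real
    and R :: "'n qstate \<Rightarrow> 'n + 'n \<Rightarrow> real"
  defines "W \<equiv> \<lambda>q. 1 + norm (q_perpK q) ^ 4 + exp (\<epsilon> * (4 * M) * norm (q_perpK q))"
  assumes theta_eq: "\<forall>k. proj_S_c \<theta>t k = \<phi> (Inl (fst k)) + \<phi> (Inr (snd k))"
    and phi_in_Phi: "\<forall>l. Re (dphi \<phi> l) \<le> 0"
    and eps: "0 < \<epsilon>"
    and Mb: "(\<Sum>k\<in>UNIV. norm (\<theta>t k)) + (\<Sum>k\<in>UNIV. norm (proj_S_c \<theta>t k)) + (\<Sum>l\<in>UNIV. norm (dphi \<phi> l)) \<le> M"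
    and M0: "0 \<le> M"
    and Wint: "integrable (measure_pmf P) W" and WE: "measure_pmf.expectation P W \<le> CW"
    and Eu: "\<forall>k. measure_pmf.expectation (step_pmf P A \<sigma>)
                 (\<lambda>y. real (unused (fst y) (fst (snd y)) (snd (snd y)) k)) \<le> \<epsilon>"
    and Rh: "\<forall>q. (\<forall>l. 0 \<le> R q l) \<and> Bvec (R q) = closest_point coneK (qvec q)"
  shows "norm (measure_pmf.expectation P (\<lambda>q. exp (complex_of_real \<epsilon> * inner_c \<theta>t q))
            - measure_pmf.expectation P (\<lambda>q. exp (complex_of_real \<epsilon> * inner_c (proj_S_c \<theta>t) q))) \<le> 2 * \<epsilon> * M * CW"
    and "norm (measure_pmf.expectation P (\<lambda>q. exp (complex_of_real \<epsilon> * inner_c (proj_S_c \<theta>t) q))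
            - measure_pmf.expectation P
                (\<lambda>q. exp (complex_of_real \<epsilon> * (\<Sum>l\<in>UNIV. dphi \<phi> l * complex_of_real (R q l))))) \<le> \<epsilon> * M * CW"
    and "norm ((measure_pmf.expectation (step_pmf P A \<sigma>)
                   (\<lambda>(q, a, s). of_nat (unused q a s (i, j)) * exp (complex_of_real \<epsilon> * inner_c \<theta>t q))
                - measure_pmf.expectation (step_pmf P A \<sigma>)
                   (\<lambda>(q, a, s). of_nat (unused q a s (i, j)) *
                      exp (complex_of_real \<epsilon> * inner_c (proj_S_c \<theta>t) q))) / complex_of_real \<epsilon>)
          \<le> 2 * M * sqrt \<epsilon> * (1 + CW)"
    and "norm ((measure_pmf.expectation (step_pmf P A \<sigma>)
                   (\<lambda>(q, a, s). of_nat (unused q a s (i, j)) *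
                      exp (complex_of_real \<epsilon> * inner_c (proj_S_c \<theta>t) q))
                - measure_pmf.expectation (step_pmf P A \<sigma>)
                   (\<lambda>(q, a, s). of_nat (unused q a s (i, j)) *
                      exp (complex_of_real \<epsilon> *
                        (\<Sum>l\<in>UNIV - {Inl i, Inr j}. dphi \<phi> l * complex_of_real (R q l))))) / complex_of_real \<epsilon>)
          \<le> 2 * M * sqrt \<epsilon> * (1 + CW)"
proof -
  let ?S = "step_pmf P A \<sigma>"
  let ?x = "\<lambda>q. norm (q_perpK q)"
  let ?Y = "\<lambda>q. ?x q * exp (\<epsilon> * M * ?x q)"
  note L1 = eps_level[OF theta_eq phi_in_Phi eps Mb M0 Wint[unfolded W_def] WE[unfolded W_def] Eu]
  have eM0: "0 \<le> \<epsilon> * M" using eps M0 by simp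
  have epsle: "0 \<le> \<epsilon>" using eps by simp
  have e4: "exp (4 * (\<epsilon> * M) * t) = exp (\<epsilon> * (4 * M) * t)" for t by (simp add: mult.assoc mult.left_commute)
  have Wb2: "?Y q \<le> W q" for q
    using texp_le_W[OF norm_ge_zero eM0, of "q_perpK q"] unfolding W_def e4 .
  have Wb3: "(?Y q) ^ 2 \<le> W q" for q
    using texp2_le_W[OF norm_ge_zero eM0, of "q_perpK q"] unfolding W_def e4 .
  have W0: "0 \<le> W q" for q
  proof -
    have "0 \<le> norm (q_perpK q) ^ 4" by simp
    moreover have "0 < exp (\<epsilon> * (4 * M) * norm (q_perpK q))" by simp
    ultimately show ?thesis unfolding W_def by linarith
  qed
  have Y0: "0 \<le> ?Y q" for q by simp
  define s where "s = sqrt \<epsilon>"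
  have s0: "0 < s" using eps by (simp add: s_def)
  have ss: "\<epsilon> / s = s" using eps by (simp add: s_def real_div_sqrt)
  have Rnn: "\<forall>l. 0 \<le> R q l" and Rcp: "Bvec (R q) = closest_point coneK (qvec q)" for q using Rh by auto
  have zt: "\<theta>t \<in> {\<theta>t, proj_S_c \<theta>t}" and zp: "proj_S_c \<theta>t \<in> {\<theta>t, proj_S_c \<theta>t}" by auto
  note pb = pw_bounds[OF theta_eq phi_in_Phi Rnn Rcp epsle Mb]
  have d12: "norm (exp (complex_of_real \<epsilon> * inner_c \<theta>t q) - exp (complex_of_real \<epsilon> * inner_c (proj_S_c \<theta>t) q))
             \<le> 2 * (\<epsilon> * M) * ?Y q" for q
  proof -
    have "norm (exp (complex_of_real \<epsilon> * inner_c \<theta>t q) - exp (complex_of_real \<epsilon> * inner_c (proj_S_c \<theta>t) q))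
      \<le> norm (exp (complex_of_real \<epsilon> * inner_c \<theta>t q) - exp (complex_of_real \<epsilon> * G \<phi> (R q)))
         + norm (exp (complex_of_real \<epsilon> * inner_c (proj_S_c \<theta>t) q) - exp (complex_of_real \<epsilon> * G \<phi> (R q)))"
      by (rule norm_diff_triangle_le[OF order_refl]) (simp add: norm_minus_commute)
    also have "\<dots> \<le> (\<epsilon> * M * ?x q) * exp (\<epsilon> * M * ?x q) + (\<epsilon> * M * ?x q) * exp (\<epsilon> * M * ?x q)"
      by (intro add_mono pb(2)[OF zt] pb(2)[OF zp])
    finally show ?thesis by (simp add: algebra_simps)
  qed
  have d2G: "norm (exp (complex_of_real \<epsilon> * inner_c (proj_S_c \<theta>t) q) - exp (complex_of_real \<epsilon> * G \<phi> (R q)))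
             \<le> (\<epsilon> * M) * ?Y q" for q
    using pb(2)[OF zp, of q] by (simp add: algebra_simps)
  have d3: "q (i, j) = 0 \<Longrightarrow> norm (exp (complex_of_real \<epsilon> * inner_c (proj_S_c \<theta>t) q)
           - exp (complex_of_real \<epsilon> * (\<Sum>l\<in>UNIV - {Inl i, Inr j}. dphi \<phi> l * complex_of_real (R q l))))
          \<le> 2 * (\<epsilon> * M) * ?Y q" for q
  proof -
    assume q0: "q (i, j) = 0"
    have "norm (exp (complex_of_real \<epsilon> * inner_c (proj_S_c \<theta>t) q)
           - exp (complex_of_real \<epsilon> * (\<Sum>l\<in>UNIV - {Inl i, Inr j}. dphi \<phi> l * complex_of_real (R q l))))
          \<le> (\<epsilon> * M * ?x q) * exp (\<epsilon> * M * ?x q)"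
      by (rule pw_bound3[OF theta_eq phi_in_Phi Rnn[of q] Rcp[of q] epsle Mb q0])
    also have "\<dots> \<le> 2 * (\<epsilon> * M) * ?Y q"
    proof -
      have h: "(\<epsilon> * M * ?x q) * exp (\<epsilon> * M * ?x q) = (\<epsilon> * M) * ?Y q" by (simp add: mult.assoc)
      have "0 \<le> (\<epsilon> * M) * ?Y q" by (rule mult_nonneg_nonneg[OF eM0 Y0])
      then show ?thesis using h by linarith
    qed
    finally show ?thesis .
  qed
  have iT: "integrable (measure_pmf P) (\<lambda>q. exp (complex_of_real \<epsilon> * inner_c \<theta>t q))"
    and iP: "integrable (measure_pmf P) (\<lambda>q. exp (complex_of_real \<epsilon> * inner_c (proj_S_c \<theta>t) q))"
    using L1(1) by auto
  have iG: "integrable (measure_pmf P) (\<lambda>q. exp (complex_of_real \<epsilon> * G \<phi> (R q)))"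
  proof (rule int_bdd[where B=1], intro ballI)
    fix q
    have "Re (G \<phi> (R q)) \<le> 0" by (rule Re_G_nonpos[OF phi_in_Phi Rnn])
    then show "norm (exp (complex_of_real \<epsilon> * G \<phi> (R q))) \<le> 1" using epsle by (simp add: mult_nonneg_nonpos)
  qed
  have iST: "integrable (measure_pmf ?S) (\<lambda>(q, a, s). of_nat (unused q a s (i, j)) * exp (complex_of_real \<epsilon> * inner_c \<theta>t q))"
    and iSP: "integrable (measure_pmf ?S) (\<lambda>(q, a, s). of_nat (unused q a s (i, j)) * exp (complex_of_real \<epsilon> * inner_c (proj_S_c \<theta>t) q))"
    using L1(2) by auto
  have iSG: "integrable (measure_pmf ?S) (\<lambda>(q, a, s). of_nat (unused q a s (i, j)) *
                      exp (complex_of_real \<epsilon> * (\<Sum>l\<in>UNIV - {Inl i, Inr j}. dphi \<phi> l * complex_of_real (R q l))))"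
  proof (rule int_bdd[where B=1], intro ballI)
    fix y :: "'n qstate \<times> 'n qstate \<times> 'n qstate"
    obtain q a s where y: "y = (q, a, s)" by (cases y) auto
    have "Re (\<Sum>l\<in>UNIV - {Inl i, Inr j}. dphi \<phi> l * complex_of_real (R q l)) \<le> 0" by (rule Re_G_nonpos[OF phi_in_Phi Rnn])
    then have "norm (exp (complex_of_real \<epsilon> * (\<Sum>l\<in>UNIV - {Inl i, Inr j}. dphi \<phi> l * complex_of_real (R q l)))) \<le> 1"
      using epsle by (simp add: mult_nonneg_nonpos)
    then show "norm ((\<lambda>(q, a, s). of_nat (unused q a s (i, j)) *
                      exp (complex_of_real \<epsilon> * (\<Sum>l\<in>UNIV - {Inl i, Inr j}. dphi \<phi> l * complex_of_real (R q l)))) y) \<le> 1"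
      using unused01[of q a s "(i, j)"] by (auto simp: y norm_mult)
  qed
  show "norm (measure_pmf.expectation P (\<lambda>q. exp (complex_of_real \<epsilon> * inner_c \<theta>t q))
            - measure_pmf.expectation P (\<lambda>q. exp (complex_of_real \<epsilon> * inner_c (proj_S_c \<theta>t) q))) \<le> 2 * \<epsilon> * M * CW"
  proof -
    have b: "\<forall>q\<in>set_pmf P. norm (exp (complex_of_real \<epsilon> * inner_c \<theta>t q) - exp (complex_of_real \<epsilon> * inner_c (proj_S_c \<theta>t) q))
               \<le> (2 * (\<epsilon> * M)) * W q"
      using d12 Wb2 eM0 by (meson mult_left_mono order_trans zero_le_numeral mult_nonneg_nonneg)
    have "0 \<le> 2 * (\<epsilon> * M)" using eM0 by simp
    note E = E_bound_P[OF Wint b this]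
    have "norm (measure_pmf.expectation P (\<lambda>q. exp (complex_of_real \<epsilon> * inner_c \<theta>t q) - exp (complex_of_real \<epsilon> * inner_c (proj_S_c \<theta>t) q)))
          \<le> 2 * (\<epsilon> * M) * CW" using E(2) mult_left_mono[OF WE \<open>0 \<le> 2 * (\<epsilon> * M)\<close>] by linarith
    then show ?thesis using iT iP by (simp add: mult.assoc)
  qed
  show "norm (measure_pmf.expectation P (\<lambda>q. exp (complex_of_real \<epsilon> * inner_c (proj_S_c \<theta>t) q))
            - measure_pmf.expectation P
                (\<lambda>q. exp (complex_of_real \<epsilon> * (\<Sum>l\<in>UNIV. dphi \<phi> l * complex_of_real (R q l))))) \<le> \<epsilon> * M * CW"
  proof -
    have b: "\<forall>q\<in>set_pmf P. norm (exp (complex_of_real \<epsilon> * inner_c (proj_S_c \<theta>t) q) - exp (complex_of_real \<epsilon> * G \<phi> (R q)))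
               \<le> (\<epsilon> * M) * W q"
      using d2G Wb2 eM0 by (meson mult_left_mono order_trans)
    note E = E_bound_P[OF Wint b eM0]
    have "norm (measure_pmf.expectation P (\<lambda>q. exp (complex_of_real \<epsilon> * inner_c (proj_S_c \<theta>t) q) - exp (complex_of_real \<epsilon> * G \<phi> (R q))))
          \<le> \<epsilon> * M * CW" using E(2) mult_left_mono[OF WE eM0] by linarith
    then show ?thesis using iG iP by simp
  qed
  have part3: "norm ((measure_pmf.expectation ?S f1 - measure_pmf.expectation ?S f2) / complex_of_real \<epsilon>)
          \<le> 2 * M * sqrt \<epsilon> * (1 + CW)"
    if i1: "integrable (measure_pmf ?S) f1" and i2: "integrable (measure_pmf ?S) f2"
      and pw: "\<forall>y\<in>set_pmf ?S. norm (f1 y - f2 y)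
            \<le> real (unused (fst y) (fst (snd y)) (snd (snd y)) (i, j)) * (2 * (\<epsilon> * M) * ?Y (fst y))"
    for f1 f2 :: "'n qstate \<times> 'n qstate \<times> 'n qstate \<Rightarrow> complex"
  proof -
    let ?u = "\<lambda>y. real (unused (fst y) (fst (snd y)) (snd (snd y)) (i, j))"
    have b: "\<forall>y\<in>set_pmf ?S. norm (f1 y - f2 y) \<le> (2 * M * s) * ?u y + (2 * \<epsilon> * M * s) * W (fst y)"
    proof
      fix y assume y: "y \<in> set_pmf ?S"
      have "?u y * (2 * (\<epsilon> * M) * ?Y (fst y)) \<le> (2 * M * s) * ?u y + (2 * \<epsilon> * M * s) * W (fst y)"
      proof (cases "?u y = 0")
        case True then show ?thesis using W0[of "fst y"] eps M0 s0 by simp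
      next
        case False
        then have u1: "?u y = 1" using unused01[of "fst y" "fst (snd y)" "snd (snd y)" "(i, j)"] by auto
        have "?Y (fst y) \<le> 1 / s + s * (?Y (fst y)) ^ 2" by (rule Y_le[OF s0])
        also have "\<dots> \<le> 1 / s + s * W (fst y)" using Wb3[of "fst y"] s0 by simp
        finally have "2 * (\<epsilon> * M) * ?Y (fst y) \<le> 2 * (\<epsilon> * M) * (1 / s + s * W (fst y))"
          using eM0 by (simp add: mult_left_mono)
        also have "\<dots> = 2 * M * (\<epsilon> / s) + (2 * \<epsilon> * M * s) * W (fst y)" by (simp add: algebra_simps)
        also have "\<dots> = 2 * M * s + (2 * \<epsilon> * M * s) * W (fst y)" by (simp add: ss)
        finally show ?thesis using u1 by simp
      qed
      then show "norm (f1 y - f2 y) \<le> (2 * M * s) * ?u y + (2 * \<epsilon> * M * s) * W (fst y)"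
        using pw y by (meson order_trans)
    qed
    have u01: "\<forall>y. 0 \<le> ?u y \<and> ?u y \<le> 1" by (simp add: unused_def)
    have a0: "0 \<le> 2 * M * s" and b0: "0 \<le> 2 * \<epsilon> * M * s" using M0 s0 eps by simp_all
    note E = E_bound_S[OF map_fst_step Wint b u01 a0 b0 Eu[rule_format, of "(i, j)"]]
    have "norm (measure_pmf.expectation ?S (\<lambda>y. f1 y - f2 y)) \<le> 2 * M * s * \<epsilon> + 2 * \<epsilon> * M * s * CW"
      using E(2) mult_left_mono[OF WE b0] by linarith
    then have "norm (measure_pmf.expectation ?S f1 - measure_pmf.expectation ?S f2) \<le> \<epsilon> * (2 * M * s * (1 + CW))"
      using i1 i2 by (simp add: algebra_simps)
    then have "norm (measure_pmf.expectation ?S f1 - measure_pmf.expectation ?S f2) / \<epsilon> \<le> 2 * M * s * (1 + CW)"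
      using eps by (simp add: divide_le_eq mult.commute)
    then show ?thesis using eps by (simp add: norm_divide s_def)
  qed
  show "norm ((measure_pmf.expectation ?S
                   (\<lambda>(q, a, s). of_nat (unused q a s (i, j)) * exp (complex_of_real \<epsilon> * inner_c \<theta>t q))
                - measure_pmf.expectation ?S
                   (\<lambda>(q, a, s). of_nat (unused q a s (i, j)) *
                      exp (complex_of_real \<epsilon> * inner_c (proj_S_c \<theta>t) q))) / complex_of_real \<epsilon>)
          \<le> 2 * M * sqrt \<epsilon> * (1 + CW)"
  proof (rule part3[OF iST iSP], intro ballI)
    fix y :: "'n qstate \<times> 'n qstate \<times> 'n qstate"
    obtain q a s where y: "y = (q, a, s)" by (cases y) auto
    show "norm ((\<lambda>(q, a, s). of_nat (unused q a s (i, j)) * exp (complex_of_real \<epsilon> * inner_c \<theta>t q)) y -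
               (\<lambda>(q, a, s). of_nat (unused q a s (i, j)) * exp (complex_of_real \<epsilon> * inner_c (proj_S_c \<theta>t) q)) y)
          \<le> real (unused (fst y) (fst (snd y)) (snd (snd y)) (i, j)) * (2 * (\<epsilon> * M) * ?Y (fst y))"
      using unused01[of q a s "(i, j)"] d12[of q]
      by (auto simp: y norm_mult simp flip: right_diff_distrib)
  qed
  show "norm ((measure_pmf.expectation ?S
                   (\<lambda>(q, a, s). of_nat (unused q a s (i, j)) *
                      exp (complex_of_real \<epsilon> * inner_c (proj_S_c \<theta>t) q))
                - measure_pmf.expectation ?S
                   (\<lambda>(q, a, s). of_nat (unused q a s (i, j)) *
                      exp (complex_of_real \<epsilon> *
                        (\<Sum>l\<in>UNIV - {Inl i, Inr j}. dphi \<phi> l * complex_of_real (R q l))))) / complex_of_real \<epsilon>)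
          \<le> 2 * M * sqrt \<epsilon> * (1 + CW)"
  proof (rule part3[OF iSP iSG], intro ballI)
    fix y :: "'n qstate \<times> 'n qstate \<times> 'n qstate"
    obtain q a s where y: "y = (q, a, s)" by (cases y) auto
    show "norm ((\<lambda>(q, a, s). of_nat (unused q a s (i, j)) * exp (complex_of_real \<epsilon> * inner_c (proj_S_c \<theta>t) q)) y -
               (\<lambda>(q, a, s). of_nat (unused q a s (i, j)) *
                      exp (complex_of_real \<epsilon> * (\<Sum>l\<in>UNIV - {Inl i, Inr j}. dphi \<phi> l * complex_of_real (R q l)))) y)
          \<le> real (unused (fst y) (fst (snd y)) (snd (snd y)) (i, j)) * (2 * (\<epsilon> * M) * ?Y (fst y))"
    proof (cases "unused q a s (i, j) = 1")
      case True
      then have "q (i, j) = 0" by (rule unused_q0)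
      then show ?thesis using True d3[of q] by (simp add: y norm_mult flip: right_diff_distrib)
    next
      case False
      then have "unused q a s (i, j) = 0" using unused01[of q a s "(i, j)"] by auto
      then show ?thesis by (simp add: y)
    qed
  qed
qed

theorem lemma7:
  fixes \<nu> :: "'n::finite \<times> 'n \<Rightarrow> real" and amax :: nat
    and A :: "real \<Rightarrow> 'n qstate pmf"
    and \<sigma> :: "'n qstate \<Rightarrow> 'n qstate pmf"
    and \<pi> :: "real \<Rightarrow> 'n qstate pmf"
    and \<theta>t :: "'n \<times> 'n \<Rightarrow> complex"
    and \<phi> :: "'n + 'n \<Rightarrow> complex"
  assumes nu_pos: "\<forall>k. 0 < \<nu> k"
    and nu_rows: "\<forall>i. (\<Sum>j\<in>UNIV. \<nu> (i, j)) = 1"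
    and nu_cols: "\<forall>j. (\<Sum>i\<in>UNIV. \<nu> (i, j)) = 1"
    and sched: "\<forall>q. \<forall>s\<in>set_pmf (\<sigma> q). is_schedule s"
    and arr_bound: "\<forall>\<epsilon>\<in>{0<..<1}. \<forall>a\<in>set_pmf (A \<epsilon>). \<forall>k. a k \<le> amax"
    and arr_mean: "\<forall>\<epsilon>\<in>{0<..<1}. \<forall>k.
        measure_pmf.expectation (A \<epsilon>) (\<lambda>a. real (a k)) = (1 - \<epsilon>) * \<nu> k"
    and arr_cov: "\<forall>\<epsilon>\<in>{0<..<1}. \<forall>k k'. k \<noteq> k' \<longrightarrow>
        measure_pmf.expectation (A \<epsilon>) (\<lambda>a. real (a k) * real (a k')) =
        measure_pmf.expectation (A \<epsilon>) (\<lambda>a. real (a k)) *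
        measure_pmf.expectation (A \<epsilon>) (\<lambda>a. real (a k'))"
    and stationary: "\<forall>\<epsilon>\<in>{0<..<1}.
        map_pmf (\<lambda>(q, a, s). next_state q a s) (step_pmf (\<pi> \<epsilon>) (A \<epsilon>) \<sigma>) = \<pi> \<epsilon>"
    and ssc_exp: "\<forall>\<eta>::real. \<exists>\<epsilon>1>0. \<exists>C. \<forall>\<epsilon>. 0 < \<epsilon> \<and> \<epsilon> \<le> \<epsilon>1 \<and> \<epsilon> < 1 \<longrightarrow>
        integrable (measure_pmf (\<pi> \<epsilon>)) (\<lambda>q. exp (\<epsilon> * \<eta> * norm (q_perpK q))) \<and>
        measure_pmf.expectation (\<pi> \<epsilon>) (\<lambda>q. exp (\<epsilon> * \<eta> * norm (q_perpK q))) < C"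
    and ssc_mom: "\<forall>r::real. 1 \<le> r \<longrightarrow> (\<exists>C. \<forall>\<epsilon>\<in>{0<..<1}.
        integrable (measure_pmf (\<pi> \<epsilon>)) (\<lambda>q. norm (q_perpK q) powr r) \<and>
        measure_pmf.expectation (\<pi> \<epsilon>) (\<lambda>q. norm (q_perpK q) powr r) \<le> C)"
    and theta_eq: "\<forall>k. proj_S_c \<theta>t k = \<phi> (Inl (fst k)) + \<phi> (Inr (snd k))"
    and phi_in_Phi: "\<forall>l. Re (dphi \<phi> l) \<le> 0"
  shows
    "(\<forall>x\<in>{\<theta>t, proj_S_c \<theta>t}.
       (\<exists>C. \<forall>\<^sub>F \<epsilon> in at_right 0.
          integrable (measure_pmf (\<pi> \<epsilon>)) (\<lambda>q. exp (complex_of_real \<epsilon> * inner_c x q)) \<and>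
          norm (measure_pmf.expectation (\<pi> \<epsilon>) (\<lambda>q. exp (complex_of_real \<epsilon> * inner_c x q))) \<le> C) \<and>
       (\<forall>k. \<exists>C. \<forall>\<^sub>F \<epsilon> in at_right 0.
          integrable (measure_pmf (step_pmf (\<pi> \<epsilon>) (A \<epsilon>) \<sigma>))
            (\<lambda>(q, a, s). of_nat (unused q a s k) * exp (complex_of_real \<epsilon> * inner_c x q)) \<and>
          norm (measure_pmf.expectation (step_pmf (\<pi> \<epsilon>) (A \<epsilon>) \<sigma>)
            (\<lambda>(q, a, s). of_nat (unused q a s k) * exp (complex_of_real \<epsilon> * inner_c x q))) / \<epsilon> \<le> C))
     \<and>
     (\<forall>R :: real \<Rightarrow> 'n qstate \<Rightarrow> 'n + 'n \<Rightarrow> real.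
       (\<forall>\<epsilon>\<in>{0<..<1}. \<forall>q. (\<forall>l. 0 \<le> R \<epsilon> q l) \<and> Bvec (R \<epsilon> q) = closest_point coneK (qvec q))
       \<longrightarrow>
       ((\<lambda>\<epsilon>. measure_pmf.expectation (\<pi> \<epsilon>) (\<lambda>q. exp (complex_of_real \<epsilon> * inner_c \<theta>t q))
            - measure_pmf.expectation (\<pi> \<epsilon>) (\<lambda>q. exp (complex_of_real \<epsilon> * inner_c (proj_S_c \<theta>t) q)))
          \<longlongrightarrow> 0) (at_right 0) \<and>
       ((\<lambda>\<epsilon>. measure_pmf.expectation (\<pi> \<epsilon>) (\<lambda>q. exp (complex_of_real \<epsilon> * inner_c (proj_S_c \<theta>t) q))
            - measure_pmf.expectation (\<pi> \<epsilon>)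
                (\<lambda>q. exp (complex_of_real \<epsilon> * (\<Sum>l\<in>UNIV. dphi \<phi> l * complex_of_real (R \<epsilon> q l)))))
          \<longlongrightarrow> 0) (at_right 0) \<and>
       (\<forall>i j.
         ((\<lambda>\<epsilon>. (measure_pmf.expectation (step_pmf (\<pi> \<epsilon>) (A \<epsilon>) \<sigma>)
                   (\<lambda>(q, a, s). of_nat (unused q a s (i, j)) * exp (complex_of_real \<epsilon> * inner_c \<theta>t q))
                - measure_pmf.expectation (step_pmf (\<pi> \<epsilon>) (A \<epsilon>) \<sigma>)
                   (\<lambda>(q, a, s). of_nat (unused q a s (i, j)) *
                      exp (complex_of_real \<epsilon> * inner_c (proj_S_c \<theta>t) q))) / complex_of_real \<epsilon>)
            \<longlongrightarrow> 0) (at_right 0) \<and>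
         ((\<lambda>\<epsilon>. (measure_pmf.expectation (step_pmf (\<pi> \<epsilon>) (A \<epsilon>) \<sigma>)
                   (\<lambda>(q, a, s). of_nat (unused q a s (i, j)) *
                      exp (complex_of_real \<epsilon> * inner_c (proj_S_c \<theta>t) q))
                - measure_pmf.expectation (step_pmf (\<pi> \<epsilon>) (A \<epsilon>) \<sigma>)
                   (\<lambda>(q, a, s). of_nat (unused q a s (i, j)) *
                      exp (complex_of_real \<epsilon> *
                        (\<Sum>l\<in>UNIV - {Inl i, Inr j}. dphi \<phi> l * complex_of_real (R \<epsilon> q l))))) / complex_of_real \<epsilon>)
            \<longlongrightarrow> 0) (at_right 0)))"
proof -
  let ?M = "(\<Sum>k\<in>UNIV. norm (\<theta>t k)) + (\<Sum>k\<in>UNIV. norm (proj_S_c \<theta>t k)) + (\<Sum>l\<in>UNIV. norm (dphi \<phi> l))"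
  have M0: "0 \<le> ?M" by (simp add: sum_nonneg add_nonneg_nonneg)
  obtain \<epsilon>1 CE where e1: "\<epsilon>1 > 0" and CE: "\<forall>\<epsilon>. 0 < \<epsilon> \<and> \<epsilon> \<le> \<epsilon>1 \<and> \<epsilon> < 1 \<longrightarrow>
        integrable (measure_pmf (\<pi> \<epsilon>)) (\<lambda>q. exp (\<epsilon> * (4 * ?M) * norm (q_perpK q))) \<and>
        measure_pmf.expectation (\<pi> \<epsilon>) (\<lambda>q. exp (\<epsilon> * (4 * ?M) * norm (q_perpK q))) < CE"
    using ssc_exp[rule_format, of "4 * ?M"] by blast
  obtain C4 where C4: "\<forall>\<epsilon>\<in>{0<..<1}.
        integrable (measure_pmf (\<pi> \<epsilon>)) (\<lambda>q. norm (q_perpK q) powr 4) \<and>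
        measure_pmf.expectation (\<pi> \<epsilon>) (\<lambda>q. norm (q_perpK q) powr 4) \<le> C4"
    using ssc_mom[rule_format, of 4] by auto
  define CW where "CW = 1 + C4 + CE"
  define W where "W \<epsilon> q = 1 + norm (q_perpK q) ^ 4 + exp (\<epsilon> * (4 * ?M) * norm (q_perpK q))" for \<epsilon> and q :: "'n qstate"
  define good where "good \<epsilon> \<longleftrightarrow> 0 < \<epsilon> \<and> \<epsilon> < 1 \<and> \<epsilon> \<le> \<epsilon>1" for \<epsilon> :: real
  have ev: "\<forall>\<^sub>F \<epsilon> in at_right 0. good \<epsilon>"
  proof -
    have "\<forall>y>0. y < min 1 \<epsilon>1 \<longrightarrow> good y" by (simp add: good_def)
    moreover have "(0::real) < min 1 \<epsilon>1" using e1 by simp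
    ultimately show ?thesis unfolding eventually_at_right_field by blast
  qed
  have W_ok: "integrable (measure_pmf (\<pi> \<epsilon>)) (W \<epsilon>) \<and> measure_pmf.expectation (\<pi> \<epsilon>) (W \<epsilon>) \<le> CW"
    if g: "good \<epsilon>" for \<epsilon>
  proof -
    have eps01: "\<epsilon> \<in> {0<..<1}" using g by (simp add: good_def)
    have c4: "integrable (measure_pmf (\<pi> \<epsilon>)) (\<lambda>q. norm (q_perpK q) powr 4) \<and>
        measure_pmf.expectation (\<pi> \<epsilon>) (\<lambda>q. norm (q_perpK q) powr 4) \<le> C4"
      by (rule C4[rule_format, OF eps01])
    have p4: "(\<lambda>q. norm (q_perpK q) powr 4) = (\<lambda>q. norm (q_perpK q) ^ 4)"
      by (rule ext) (rule powr4[OF norm_ge_zero])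
    have i4: "integrable (measure_pmf (\<pi> \<epsilon>)) (\<lambda>q. norm (q_perpK q) ^ 4)"
      using c4 unfolding p4 by (rule conjunct1)
    have E4: "measure_pmf.expectation (\<pi> \<epsilon>) (\<lambda>q. norm (q_perpK q) ^ 4) \<le> C4"
      using c4 unfolding p4 by (rule conjunct2)
    have gg: "0 < \<epsilon> \<and> \<epsilon> \<le> \<epsilon>1 \<and> \<epsilon> < 1" using g by (simp add: good_def)
    have ce: "integrable (measure_pmf (\<pi> \<epsilon>)) (\<lambda>q. exp (\<epsilon> * (4 * ?M) * norm (q_perpK q))) \<and>
        measure_pmf.expectation (\<pi> \<epsilon>) (\<lambda>q. exp (\<epsilon> * (4 * ?M) * norm (q_perpK q))) < CE"
      by (rule CE[rule_format, OF gg])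
    have iE: "integrable (measure_pmf (\<pi> \<epsilon>)) (\<lambda>q. exp (\<epsilon> * (4 * ?M) * norm (q_perpK q)))"
      using ce by (rule conjunct1)
    have EE: "measure_pmf.expectation (\<pi> \<epsilon>) (\<lambda>q. exp (\<epsilon> * (4 * ?M) * norm (q_perpK q))) < CE"
      using ce by (rule conjunct2)
    have i1: "integrable (measure_pmf (\<pi> \<epsilon>)) (\<lambda>q. 1 :: real)" by simp
    have i14: "integrable (measure_pmf (\<pi> \<epsilon>)) (\<lambda>q. 1 + norm (q_perpK q) ^ 4)"
      by (rule Bochner_Integration.integrable_add[OF i1 i4])
    have iW: "integrable (measure_pmf (\<pi> \<epsilon>)) (W \<epsilon>)"
      unfolding W_def by (rule Bochner_Integration.integrable_add[OF i14 iE])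
    have "measure_pmf.expectation (\<pi> \<epsilon>) (W \<epsilon>) = measure_pmf.expectation (\<pi> \<epsilon>) (\<lambda>q. 1 + norm (q_perpK q) ^ 4)
          + measure_pmf.expectation (\<pi> \<epsilon>) (\<lambda>q. exp (\<epsilon> * (4 * ?M) * norm (q_perpK q)))"
      unfolding W_def by (rule Bochner_Integration.integral_add[OF i14 iE])
    also have "measure_pmf.expectation (\<pi> \<epsilon>) (\<lambda>q. 1 + norm (q_perpK q) ^ 4)
        = measure_pmf.expectation (\<pi> \<epsilon>) (\<lambda>q. 1 :: real) + measure_pmf.expectation (\<pi> \<epsilon>) (\<lambda>q. norm (q_perpK q) ^ 4)"
      by (rule Bochner_Integration.integral_add[OF i1 i4])
    also have "measure_pmf.expectation (\<pi> \<epsilon>) (\<lambda>q. 1 :: real) = 1" by simp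
    finally show ?thesis using iW E4 EE unfolding CW_def by linarith
  qed
  have Eu: "\<forall>k. measure_pmf.expectation (step_pmf (\<pi> \<epsilon>) (A \<epsilon>) \<sigma>)
                 (\<lambda>y. real (unused (fst y) (fst (snd y)) (snd (snd y)) k)) \<le> \<epsilon>"
    if g: "good \<epsilon>" for \<epsilon>
  proof
    fix k :: "'n \<times> 'n"
    have eps01: "\<epsilon> \<in> {0<..<1}" using g by (simp add: good_def)
    obtain i j where k: "k = (i, j)" by (cases k)
    show "measure_pmf.expectation (step_pmf (\<pi> \<epsilon>) (A \<epsilon>) \<sigma>)
                 (\<lambda>y. real (unused (fst y) (fst (snd y)) (snd (snd y)) k)) \<le> \<epsilon>"
      unfolding k
    proof (rule unused_le[OF sched _ _ nu_rows])
      show "\<forall>a\<in>set_pmf (A \<epsilon>). \<forall>k. a k \<le> amax" using arr_bound eps01 by blast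
      show "\<forall>k. measure_pmf.expectation (A \<epsilon>) (\<lambda>a. real (a k)) = (1 - \<epsilon>) * \<nu> k" using arr_mean eps01 by blast
      show "map_pmf (\<lambda>(q, a, s). next_state q a s) (step_pmf (\<pi> \<epsilon>) (A \<epsilon>) \<sigma>) = \<pi> \<epsilon>" using stationary eps01 by blast
    qed
  qed
  note L1 = eps_level[OF theta_eq phi_in_Phi _ order_refl M0]
  note L2 = eps_level2[OF theta_eq phi_in_Phi _ order_refl M0]
  have gpos: "good \<epsilon> \<Longrightarrow> 0 < \<epsilon>" for \<epsilon> by (simp add: good_def)
  have part1: "\<forall>x\<in>{\<theta>t, proj_S_c \<theta>t}.
       (\<exists>C. \<forall>\<^sub>F \<epsilon> in at_right 0.
          integrable (measure_pmf (\<pi> \<epsilon>)) (\<lambda>q. exp (complex_of_real \<epsilon> * inner_c x q)) \<and>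
          norm (measure_pmf.expectation (\<pi> \<epsilon>) (\<lambda>q. exp (complex_of_real \<epsilon> * inner_c x q))) \<le> C) \<and>
       (\<forall>k. \<exists>C. \<forall>\<^sub>F \<epsilon> in at_right 0.
          integrable (measure_pmf (step_pmf (\<pi> \<epsilon>) (A \<epsilon>) \<sigma>))
            (\<lambda>(q, a, s). of_nat (unused q a s k) * exp (complex_of_real \<epsilon> * inner_c x q)) \<and>
          norm (measure_pmf.expectation (step_pmf (\<pi> \<epsilon>) (A \<epsilon>) \<sigma>)
            (\<lambda>(q, a, s). of_nat (unused q a s k) * exp (complex_of_real \<epsilon> * inner_c x q))) / \<epsilon> \<le> C)"
  proof (intro ballI conjI allI)
    fix x assume x: "x \<in> {\<theta>t, proj_S_c \<theta>t}"
    show "\<exists>C. \<forall>\<^sub>F \<epsilon> in at_right 0.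
          integrable (measure_pmf (\<pi> \<epsilon>)) (\<lambda>q. exp (complex_of_real \<epsilon> * inner_c x q)) \<and>
          norm (measure_pmf.expectation (\<pi> \<epsilon>) (\<lambda>q. exp (complex_of_real \<epsilon> * inner_c x q))) \<le> C"
    proof (intro exI[of _ CW] eventually_mono[OF ev])
      fix \<epsilon> assume g: "good \<epsilon>"
      show "integrable (measure_pmf (\<pi> \<epsilon>)) (\<lambda>q. exp (complex_of_real \<epsilon> * inner_c x q)) \<and>
          norm (measure_pmf.expectation (\<pi> \<epsilon>) (\<lambda>q. exp (complex_of_real \<epsilon> * inner_c x q))) \<le> CW"
        using L1(1)[OF gpos[OF g] W_ok[OF g, unfolded W_def, THEN conjunct1] W_ok[OF g, unfolded W_def, THEN conjunct2] Eu[OF g]] x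
        by blast
    qed
    fix k
    show "\<exists>C. \<forall>\<^sub>F \<epsilon> in at_right 0.
          integrable (measure_pmf (step_pmf (\<pi> \<epsilon>) (A \<epsilon>) \<sigma>))
            (\<lambda>(q, a, s). of_nat (unused q a s k) * exp (complex_of_real \<epsilon> * inner_c x q)) \<and>
          norm (measure_pmf.expectation (step_pmf (\<pi> \<epsilon>) (A \<epsilon>) \<sigma>)
            (\<lambda>(q, a, s). of_nat (unused q a s k) * exp (complex_of_real \<epsilon> * inner_c x q))) / \<epsilon> \<le> C"
    proof (intro exI[of _ "1 + ?M * CW"] eventually_mono[OF ev])
      fix \<epsilon> assume g: "good \<epsilon>"
      show "integrable (measure_pmf (step_pmf (\<pi> \<epsilon>) (A \<epsilon>) \<sigma>))
            (\<lambda>(q, a, s). of_nat (unused q a s k) * exp (complex_of_real \<epsilon> * inner_c x q)) \<and>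
          norm (measure_pmf.expectation (step_pmf (\<pi> \<epsilon>) (A \<epsilon>) \<sigma>)
            (\<lambda>(q, a, s). of_nat (unused q a s k) * exp (complex_of_real \<epsilon> * inner_c x q))) / \<epsilon> \<le> 1 + ?M * CW"
        using L1(2)[OF gpos[OF g] W_ok[OF g, unfolded W_def, THEN conjunct1] W_ok[OF g, unfolded W_def, THEN conjunct2] Eu[OF g]] x
        by blast
    qed
  qed
  have lim1: "((\<lambda>\<epsilon>. c * \<epsilon>) \<longlongrightarrow> 0) (at_right 0)" for c :: real
    using tendsto_mult[OF tendsto_const[of c] tendsto_ident_at[of 0 "{0<..}"]] by simp
  have lim2: "((\<lambda>\<epsilon>. c * sqrt \<epsilon>) \<longlongrightarrow> 0) (at_right 0)" for c :: real
    using tendsto_mult[OF tendsto_const[of c] tendsto_real_sqrt[OF tendsto_ident_at[of 0 "{0<..}"]]] by simp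
  have part2: "\<forall>R :: real \<Rightarrow> 'n qstate \<Rightarrow> 'n + 'n \<Rightarrow> real.
       (\<forall>\<epsilon>\<in>{0<..<1}. \<forall>q. (\<forall>l. 0 \<le> R \<epsilon> q l) \<and> Bvec (R \<epsilon> q) = closest_point coneK (qvec q))
       \<longrightarrow>
       ((\<lambda>\<epsilon>. measure_pmf.expectation (\<pi> \<epsilon>) (\<lambda>q. exp (complex_of_real \<epsilon> * inner_c \<theta>t q))
            - measure_pmf.expectation (\<pi> \<epsilon>) (\<lambda>q. exp (complex_of_real \<epsilon> * inner_c (proj_S_c \<theta>t) q)))
          \<longlongrightarrow> 0) (at_right 0) \<and>
       ((\<lambda>\<epsilon>. measure_pmf.expectation (\<pi> \<epsilon>) (\<lambda>q. exp (complex_of_real \<epsilon> * inner_c (proj_S_c \<theta>t) q))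
            - measure_pmf.expectation (\<pi> \<epsilon>)
                (\<lambda>q. exp (complex_of_real \<epsilon> * (\<Sum>l\<in>UNIV. dphi \<phi> l * complex_of_real (R \<epsilon> q l)))))
          \<longlongrightarrow> 0) (at_right 0) \<and>
       (\<forall>i j.
         ((\<lambda>\<epsilon>. (measure_pmf.expectation (step_pmf (\<pi> \<epsilon>) (A \<epsilon>) \<sigma>)
                   (\<lambda>(q, a, s). of_nat (unused q a s (i, j)) * exp (complex_of_real \<epsilon> * inner_c \<theta>t q))
                - measure_pmf.expectation (step_pmf (\<pi> \<epsilon>) (A \<epsilon>) \<sigma>)
                   (\<lambda>(q, a, s). of_nat (unused q a s (i, j)) *
                      exp (complex_of_real \<epsilon> * inner_c (proj_S_c \<theta>t) q))) / complex_of_real \<epsilon>)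
            \<longlongrightarrow> 0) (at_right 0) \<and>
         ((\<lambda>\<epsilon>. (measure_pmf.expectation (step_pmf (\<pi> \<epsilon>) (A \<epsilon>) \<sigma>)
                   (\<lambda>(q, a, s). of_nat (unused q a s (i, j)) *
                      exp (complex_of_real \<epsilon> * inner_c (proj_S_c \<theta>t) q))
                - measure_pmf.expectation (step_pmf (\<pi> \<epsilon>) (A \<epsilon>) \<sigma>)
                   (\<lambda>(q, a, s). of_nat (unused q a s (i, j)) *
                      exp (complex_of_real \<epsilon> *
                        (\<Sum>l\<in>UNIV - {Inl i, Inr j}. dphi \<phi> l * complex_of_real (R \<epsilon> q l))))) / complex_of_real \<epsilon>)
            \<longlongrightarrow> 0) (at_right 0))"
  proof (intro allI impI)
    fix R :: "real \<Rightarrow> 'n qstate \<Rightarrow> 'n + 'n \<Rightarrow> real"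
    assume RH: "\<forall>\<epsilon>\<in>{0<..<1}. \<forall>q. (\<forall>l. 0 \<le> R \<epsilon> q l) \<and> Bvec (R \<epsilon> q) = closest_point coneK (qvec q)"
    have Rg: "\<forall>q. (\<forall>l. 0 \<le> R \<epsilon> q l) \<and> Bvec (R \<epsilon> q) = closest_point coneK (qvec q)" if "good \<epsilon>" for \<epsilon>
      using RH that by (simp add: good_def)
    show "((\<lambda>\<epsilon>. measure_pmf.expectation (\<pi> \<epsilon>) (\<lambda>q. exp (complex_of_real \<epsilon> * inner_c \<theta>t q))
            - measure_pmf.expectation (\<pi> \<epsilon>) (\<lambda>q. exp (complex_of_real \<epsilon> * inner_c (proj_S_c \<theta>t) q)))
          \<longlongrightarrow> 0) (at_right 0) \<and>
       ((\<lambda>\<epsilon>. measure_pmf.expectation (\<pi> \<epsilon>) (\<lambda>q. exp (complex_of_real \<epsilon> * inner_c (proj_S_c \<theta>t) q))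
            - measure_pmf.expectation (\<pi> \<epsilon>)
                (\<lambda>q. exp (complex_of_real \<epsilon> * (\<Sum>l\<in>UNIV. dphi \<phi> l * complex_of_real (R \<epsilon> q l)))))
          \<longlongrightarrow> 0) (at_right 0) \<and>
       (\<forall>i j.
         ((\<lambda>\<epsilon>. (measure_pmf.expectation (step_pmf (\<pi> \<epsilon>) (A \<epsilon>) \<sigma>)
                   (\<lambda>(q, a, s). of_nat (unused q a s (i, j)) * exp (complex_of_real \<epsilon> * inner_c \<theta>t q))
                - measure_pmf.expectation (step_pmf (\<pi> \<epsilon>) (A \<epsilon>) \<sigma>)
                   (\<lambda>(q, a, s). of_nat (unused q a s (i, j)) *
                      exp (complex_of_real \<epsilon> * inner_c (proj_S_c \<theta>t) q))) / complex_of_real \<epsilon>)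
            \<longlongrightarrow> 0) (at_right 0) \<and>
         ((\<lambda>\<epsilon>. (measure_pmf.expectation (step_pmf (\<pi> \<epsilon>) (A \<epsilon>) \<sigma>)
                   (\<lambda>(q, a, s). of_nat (unused q a s (i, j)) *
                      exp (complex_of_real \<epsilon> * inner_c (proj_S_c \<theta>t) q))
                - measure_pmf.expectation (step_pmf (\<pi> \<epsilon>) (A \<epsilon>) \<sigma>)
                   (\<lambda>(q, a, s). of_nat (unused q a s (i, j)) *
                      exp (complex_of_real \<epsilon> *
                        (\<Sum>l\<in>UNIV - {Inl i, Inr j}. dphi \<phi> l * complex_of_real (R \<epsilon> q l))))) / complex_of_real \<epsilon>)
            \<longlongrightarrow> 0) (at_right 0))"
    proof (intro conjI allI)
      show "((\<lambda>\<epsilon>. measure_pmf.expectation (\<pi> \<epsilon>) (\<lambda>q. exp (complex_of_real \<epsilon> * inner_c \<theta>t q))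
            - measure_pmf.expectation (\<pi> \<epsilon>) (\<lambda>q. exp (complex_of_real \<epsilon> * inner_c (proj_S_c \<theta>t) q)))
          \<longlongrightarrow> 0) (at_right 0)"
        proof (rule Lim_null_comparison[OF eventually_mono[OF ev] lim1[of "2 * ?M * CW"]], goal_cases)
          case (1 \<epsilon>) note g = this
          note B = L2[OF gpos[OF g] W_ok[OF g, unfolded W_def, THEN conjunct1] W_ok[OF g, unfolded W_def, THEN conjunct2] Eu[OF g] Rg[OF g]]
          show ?case using B(1) by (simp add: mult_ac)
        qed
      show "((\<lambda>\<epsilon>. measure_pmf.expectation (\<pi> \<epsilon>) (\<lambda>q. exp (complex_of_real \<epsilon> * inner_c (proj_S_c \<theta>t) q))
            - measure_pmf.expectation (\<pi> \<epsilon>)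
                (\<lambda>q. exp (complex_of_real \<epsilon> * (\<Sum>l\<in>UNIV. dphi \<phi> l * complex_of_real (R \<epsilon> q l)))))
          \<longlongrightarrow> 0) (at_right 0)"
        proof (rule Lim_null_comparison[OF eventually_mono[OF ev] lim1[of "?M * CW"]], goal_cases)
          case (1 \<epsilon>) note g = this
          note B = L2[OF gpos[OF g] W_ok[OF g, unfolded W_def, THEN conjunct1] W_ok[OF g, unfolded W_def, THEN conjunct2] Eu[OF g] Rg[OF g]]
          show ?case using B(2) by (simp add: mult_ac)
        qed
      fix i j
      show "((\<lambda>\<epsilon>. (measure_pmf.expectation (step_pmf (\<pi> \<epsilon>) (A \<epsilon>) \<sigma>)
                   (\<lambda>(q, a, s). of_nat (unused q a s (i, j)) * exp (complex_of_real \<epsilon> * inner_c \<theta>t q))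
                - measure_pmf.expectation (step_pmf (\<pi> \<epsilon>) (A \<epsilon>) \<sigma>)
                   (\<lambda>(q, a, s). of_nat (unused q a s (i, j)) *
                      exp (complex_of_real \<epsilon> * inner_c (proj_S_c \<theta>t) q))) / complex_of_real \<epsilon>)
            \<longlongrightarrow> 0) (at_right 0)"
        proof (rule Lim_null_comparison[OF eventually_mono[OF ev] lim2[of "2 * ?M * (1 + CW)"]], goal_cases)
          case (1 \<epsilon>) note g = this
          note B = L2[OF gpos[OF g] W_ok[OF g, unfolded W_def, THEN conjunct1] W_ok[OF g, unfolded W_def, THEN conjunct2] Eu[OF g] Rg[OF g]]
          show ?case using B(3)[of i j] by (simp add: mult_ac)
        qed
      show "((\<lambda>\<epsilon>. (measure_pmf.expectation (step_pmf (\<pi> \<epsilon>) (A \<epsilon>) \<sigma>)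
                   (\<lambda>(q, a, s). of_nat (unused q a s (i, j)) *
                      exp (complex_of_real \<epsilon> * inner_c (proj_S_c \<theta>t) q))
                - measure_pmf.expectation (step_pmf (\<pi> \<epsilon>) (A \<epsilon>) \<sigma>)
                   (\<lambda>(q, a, s). of_nat (unused q a s (i, j)) *
                      exp (complex_of_real \<epsilon> *
                        (\<Sum>l\<in>UNIV - {Inl i, Inr j}. dphi \<phi> l * complex_of_real (R \<epsilon> q l))))) / complex_of_real \<epsilon>)
            \<longlongrightarrow> 0) (at_right 0)"
        proof (rule Lim_null_comparison[OF eventually_mono[OF ev] lim2[of "2 * ?M * (1 + CW)"]], goal_cases)
          case (1 \<epsilon>) note g = this
          note B = L2[OF gpos[OF g] W_ok[OF g, unfolded W_def, THEN conjunct1] W_ok[OF g, unfolded W_def, THEN conjunct2] Eu[OF g] Rg[OF g]]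
          show ?case using B(4)[of i j] by (simp add: mult_ac)
        qed
    qed
  qed
  show ?thesis using part1 part2 by blast
qed

end
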